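(* Let $T$ be a basic maximal rigid object of $\mathcal{C}_n$ with top summand $T_1=(1,n-1)$, and let $X$ be an indecomposable object of $\mathcal{C}_n$ with $X\notin\mathcal{F}$. Then: (1) $\operatorname{Hom}_{\mathcal{C}_n}(T,X)=0$ if and only if $X=(n,kn-1)$ for some integer $k\ge2$. (2) If $X$ is not of the form in (1), then $\operatorname{Hom}_{\mathcal{C}_n}(T,X)\cong M(\sigma^{\mathcal{T}}_X)\oplus M(\sigma^{\mathcal{D}}_X)$ as $\Lambda_T$-modules, where $M(\sigma)$ is the zero module if $\sigma$ is the zero string.
   Context: Let $k$ be algebraically closed, $n\ge2$, $\mathcal{T}_n$ the tube of rank $n$ (nilpotent finite-dimensional representations of the cyclically oriented $\tilde A_{n-1}$-quiver, hereditary, AR-translation $\tau$), and $\mathcal{C}_n=D^b(\mathcal{T}_n)/\tau^{-1}[1]$ the cluster tube, whose indecomposables are identified with those of $\mathcal{T}_n$. Indecomposables have coordinates $(a,b)$, $a\in\mathbb{Z}/n$ (represented in $\{1,\dots,n\}$), $b\ge1$ the quasilength, with $\tau(a,b)=(a-1,b)$ and irreducible maps $(a,b)\to(a,b+1)$, $(a,b)\to(a+1,b-1)$. For indecomposables $X,Y$, $\operatorname{Hom}_{\mathcal{C}_n}(X,Y)=\operatorname{Hom}_{\mathcal{T}_n}(X,Y)\oplus\operatorname{Hom}_{D^b}(X,\tau^{-1}Y[1])$; elements of the first summand are $\mathcal{T}$-maps, of the second $\mathcal{D}$-maps. Wing of $X=(a,i)$, $i\le n-1$: $\mathcal{W}_X=\{(a+s,i'):s\ge0,i'\ge1,s+i'\le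 i\}$. $T$ maximal rigid: $\operatorname{Ext}^1(T,T)=0$ and $\operatorname{Ext}^1(T\oplus X,T\oplus X)=0\Rightarrow X\in\operatorname{add}T$; a basic one $T=\bigoplus_{i=1}^{n-1}T_i$ has a unique summand $T_1$ of quasilength $n-1$ (top summand) with all summands in $\mathcal{W}_{T_1}$; coordinates are chosen so that $T_1=(1,n-1)$. $\Lambda_T=\operatorname{End}_{\mathcal{C}_n}(T)^{\mathrm{op}}$. $\mathcal{F}$ is the set of indecomposables $(a,b)$, $a\in\{1,\dots,n\}$, with $b\le n-1$ or $a+b\le2n-1$. The quiver of $\Lambda_T$ has a vertex $i$ for each $T_i$; arrows $i\to j$ correspond to maps $T_j\to T_i$ irreducible in $\operatorname{add}T$. A string is a trivial string $e_v$ at a vertex, or a word $\alpha_t\cdots\alpha_1$ of arrows and formal inverses with matching endpoints, no letter followed by its inverse, and no subword of it or its inverse a zero relation; there is also the zero string. $M(\sigma)$ is the string module: basis $z_0,\dots,z_t$ placed at the successive vertices of $\sigma$, each letter acting by sending the corresponding basis vector to the next (arrow) or previous (inverse arrow), other actions zero. For indecomposable $X$ and $*\in\{\mathcal{T},\mathcal{D}\}$ let $R^*(X)$ be the set of indecomposables with a nonzero $*$-map to $X$; if $R^*(X)\cap\operatorname{add}T\neq\emptyset$, $\sigma^*_X$ is the unique string traversing exactly the vertices of the summands of $T$ in $R^*(X)$, each exactly once, and ending at the vertex of the one of highest quasilength; otherwise $\sigma^*_X$ is the zero string. *)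

theory Defs
  imports "HOL-Computational_Algebra.Polynomial"
begin

text \<open>Indecomposables are pairs (a,b) of integers, a in {1..n} (position, residue mod n),
  b >= 1 (quasilength).  (a,b) is the uniserial module with socle (a,1), composition
  factors a, a+1, ..., a+b-1 (mod n); irreducible maps (a,b)->(a,b+1) (mono) and
  (a,b)->(a+1,b-1) (epi); tau (a,b) = (a-1,b).\<close>

type_synonym obj = "int \<times> int"

definition md :: "int \<Rightarrow> int \<Rightarrow> int" where
  "md n x = (x - 1) mod n + 1"

definition indec :: "int \<Rightarrow> obj \<Rightarrow> bool" where
  "indec n X \<longleftrightarrow> 1 \<le> fst X \<and> fst X \<le> n \<and> 1 \<le> snd X"

definition tau :: "int \<Rightarrow> obj \<Rightarrow> obj" where
  "tau n X = (md n (fst X - 1), snd X)"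

text \<open>Basis of Hom in the tube from X to Y: standard maps X ->> Z >-> Y, Z of length i.\<close>
definition BT :: "int \<Rightarrow> obj \<Rightarrow> obj \<Rightarrow> int set" where
  "BT n X Y = {i. 1 \<le> i \<and> i \<le> min (snd X) (snd Y) \<and> i mod n = (fst X + snd X - fst Y) mod n}"

datatype tag = TM | DM

type_synonym bas = "tag \<times> int"

text \<open>Basis of Hom_C(X,Y) = Hom_T(X,Y) (+) Hom_D(X, tau^-1 Y[1]); the D-part is identified
  (Serre duality) with the dual of Hom_T(Y, tau^2 X), with the dual basis.\<close>
definition HB :: "int \<Rightarrow> obj \<Rightarrow> obj \<Rightarrow> bas set" where
  "HB n X Y = {(TM, i) | i. i \<in> BT n X Y} \<union> {(DM, i) | i. i \<in> BT n Y (tau n (tau n X))}"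

text \<open>Composition g o f of basis maps f : X -> Y and g : Y -> Z (None = zero).\<close>
fun bcomp :: "int \<Rightarrow> obj \<Rightarrow> obj \<Rightarrow> obj \<Rightarrow> bas \<Rightarrow> bas \<Rightarrow> bas option" where
  "bcomp n X Y Z (TM, j) (TM, i) =
     (let m = i + j - snd Y in if (TM, m) \<in> HB n X Z then Some (TM, m) else None)"
| "bcomp n X Y Z (DM, j) (TM, i) =
     (let m = j + snd X - i in if (DM, m) \<in> HB n X Z then Some (DM, m) else None)"
| "bcomp n X Y Z (TM, j) (DM, i) =
     (let m = i + snd Z - j in if (DM, m) \<in> HB n X Z then Some (DM, m) else None)"
| "bcomp n X Y Z (DM, j) (DM, i) = None"

text \<open>Ext^1_C(X,Y) = Hom_C(X,Y[1]) and [1] = tau in C_n.\<close>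
definition ext1dim :: "int \<Rightarrow> obj \<Rightarrow> obj \<Rightarrow> nat" where
  "ext1dim n X Y = card (HB n X (tau n Y))"

text \<open>Objects are finite direct sums of indecomposables, given as lists.\<close>
definition rigid :: "int \<Rightarrow> obj list \<Rightarrow> bool" where
  "rigid n T \<longleftrightarrow> (\<forall>Y\<in>set T. \<forall>Z\<in>set T. ext1dim n Y Z = 0)"

definition max_rigid :: "int \<Rightarrow> obj list \<Rightarrow> bool" where
  "max_rigid n T \<longleftrightarrow> (\<forall>Y\<in>set T. indec n Y) \<and> rigid n T \<and>
     (\<forall>Xs. (\<forall>Y\<in>set Xs. indec n Y) \<longrightarrow> rigid n (T @ Xs) \<longrightarrow> set Xs \<subseteq> set T)"

definition Fset :: "int \<Rightarrow> obj set" where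
  "Fset n = {(a, b). 1 \<le> a \<and> a \<le> n \<and> 1 \<le> b \<and> (b \<le> n - 1 \<or> a + b \<le> 2 * n - 1)}"

text \<open>Vertices are indices i < length T (summand T ! i).  Maps T_j -> T_i:\<close>
definition radB :: "int \<Rightarrow> obj list \<Rightarrow> nat \<Rightarrow> nat \<Rightarrow> bas set" where
  "radB n T i j = HB n (T ! j) (T ! i) - (if i = j then {(TM, snd (T ! i))} else {})"

definition rad2B :: "int \<Rightarrow> obj list \<Rightarrow> nat \<Rightarrow> nat \<Rightarrow> bas set" where
  "rad2B n T i j = {\<beta>. \<exists>k < length T. \<exists>\<gamma> \<delta>. \<delta> \<in> radB n T k j \<and> \<gamma> \<in> radB n T i k \<and>
      bcomp n (T ! j) (T ! k) (T ! i) \<gamma> \<delta> = Some \<beta>}"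

type_synonym arrow = "nat \<times> nat \<times> bas"

text \<open>An arrow (i,j,mu) goes from vertex i to vertex j and is represented by the basis map
  mu : T_j -> T_i, which is irreducible in add T (basis of rad/rad^2).\<close>
definition Arr :: "int \<Rightarrow> obj list \<Rightarrow> arrow set" where
  "Arr n T = {(i, j, \<mu>) | i j \<mu>. i < length T \<and> j < length T \<and> \<mu> \<in> radB n T i j - rad2B n T i j}"

definition asrc :: "arrow \<Rightarrow> nat" where "asrc \<alpha> = fst \<alpha>"
definition atgt :: "arrow \<Rightarrow> nat" where "atgt \<alpha> = fst (snd \<alpha>)"

text \<open>Composite in Lambda_T of a path of arrows (listed in traversal order); None = zero.\<close>
fun pc :: "int \<Rightarrow> obj list \<Rightarrow> arrow list \<Rightarrow> bas option" where
  "pc n T [] = None"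
| "pc n T [(i, j, \<mu>)] = Some \<mu>"
| "pc n T ((i, j, \<mu>) # b # rest) =
     (case pc n T (b # rest) of None \<Rightarrow> None
      | Some \<nu> \<Rightarrow> bcomp n (T ! atgt (last (b # rest))) (T ! j) (T ! i) \<mu> \<nu>)"

text \<open>A letter is an arrow with a direction (True = arrow, False = formal inverse).
  A (nonzero) string is a start vertex v0 and the letters in traversal order
  (for the word alpha_t ... alpha_1 this is the list [alpha_1, ..., alpha_t]).\<close>
type_synonym letter = "arrow \<times> bool"
type_synonym str = "nat \<times> letter list"

definition lsrc :: "letter \<Rightarrow> nat" where
  "lsrc l = (if snd l then asrc (fst l) else atgt (fst l))"
definition ltgt :: "letter \<Rightarrow> nat" where
  "ltgt l = (if snd l then atgt (fst l) else asrc (fst l))"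

definition svtx :: "str \<Rightarrow> nat list" where
  "svtx \<sigma> = fst \<sigma> # map ltgt (snd \<sigma>)"

definition seg :: "'a list \<Rightarrow> nat \<Rightarrow> nat \<Rightarrow> 'a list" where
  "seg L s r = take (r - s) (drop s L)"

definition is_string :: "int \<Rightarrow> obj list \<Rightarrow> str \<Rightarrow> bool" where
  "is_string n T \<sigma> \<longleftrightarrow> (let v0 = fst \<sigma>; L = snd \<sigma> in
     v0 < length T \<and> (\<forall>l\<in>set L. fst l \<in> Arr n T) \<and>
     (L \<noteq> [] \<longrightarrow> lsrc (L ! 0) = v0) \<and>
     (\<forall>s. Suc s < length L \<longrightarrow> ltgt (L ! s) = lsrc (L ! Suc s) \<and>
          \<not> (fst (L ! Suc s) = fst (L ! s) \<and> snd (L ! Suc s) \<noteq> snd (L ! s))) \<and>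
     (\<forall>s r. s + 2 \<le> r \<and> r \<le> length L \<longrightarrow>
          ((\<forall>l\<in>set (seg L s r). snd l) \<longrightarrow> pc n T (map fst (seg L s r)) \<noteq> None) \<and>
          ((\<forall>l\<in>set (seg L s r). \<not> snd l) \<longrightarrow> pc n T (rev (map fst (seg L s r))) \<noteq> None)))"

text \<open>Representations of the quiver: a basis set at each vertex and, for each arrow, a matrix
  (act alpha b' b = coefficient of b' in alpha . b).\<close>
type_synonym ('b, 'k) qrep = "(nat \<Rightarrow> 'b set) \<times> (arrow \<Rightarrow> 'b \<Rightarrow> 'b \<Rightarrow> 'k)"

definition rep_iso :: "int \<Rightarrow> obj list \<Rightarrow> ('b, 'k::field) qrep \<Rightarrow> ('c, 'k) qrep \<Rightarrow> bool" where
  "rep_iso n T M N \<longleftrightarrow> (let B1 = fst M; A1 = snd M; B2 = fst N; A2 = snd N in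
     (\<forall>v. v \<ge> length T \<longrightarrow> B1 v = {} \<and> B2 v = {}) \<and>
     (\<exists>(P :: nat \<Rightarrow> 'c \<Rightarrow> 'b \<Rightarrow> 'k) (Q :: nat \<Rightarrow> 'b \<Rightarrow> 'c \<Rightarrow> 'k).
        (\<forall>v < length T. finite (B1 v) \<and> finite (B2 v) \<and>
           (\<forall>x\<in>B1 v. \<forall>y\<in>B1 v. (\<Sum>z\<in>B2 v. Q v x z * P v z y) = (if x = y then 1 else 0)) \<and>
           (\<forall>x\<in>B2 v. \<forall>y\<in>B2 v. (\<Sum>z\<in>B1 v. P v x z * Q v z y) = (if x = y then 1 else 0))) \<and>
        (\<forall>\<alpha>\<in>Arr n T. \<forall>x\<in>B2 (atgt \<alpha>). \<forall>y\<in>B1 (asrc \<alpha>).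
           (\<Sum>z\<in>B1 (atgt \<alpha>). P (atgt \<alpha>) x z * A1 \<alpha> z y) =
           (\<Sum>z\<in>B2 (asrc \<alpha>). A2 \<alpha> x z * P (asrc \<alpha>) z y))))"

text \<open>String module M(sigma); None is the zero string (zero module).\<close>
definition string_mod :: "str option \<Rightarrow> (nat, 'k::field) qrep" where
  "string_mod \<sigma>o = (case \<sigma>o of None \<Rightarrow> (\<lambda>v. {}, \<lambda>\<alpha> x y. 0)
     | Some \<sigma> \<Rightarrow>
       (\<lambda>v. {s. s \<le> length (snd \<sigma>) \<and> svtx \<sigma> ! s = v},
        \<lambda>\<alpha> s' s. if (s' = Suc s \<and> s < length (snd \<sigma>) \<and> snd \<sigma> ! s = (\<alpha>, True)) \<or>
                     (s = Suc s' \<and> s' < length (snd \<sigma>) \<and> snd \<sigma> ! s' = (\<alpha>, False))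
                  then 1 else 0))"

definition rep_sum :: "('b, 'k::field) qrep \<Rightarrow> ('c, 'k) qrep \<Rightarrow> ('b + 'c, 'k) qrep" where
  "rep_sum M N = (\<lambda>v. Inl ` fst M v \<union> Inr ` fst N v,
     \<lambda>\<alpha> x y. (case (x, y) of (Inl a, Inl b) \<Rightarrow> snd M \<alpha> a b
                          | (Inr a, Inr b) \<Rightarrow> snd N \<alpha> a b | _ \<Rightarrow> 0))"

text \<open>The Lambda_T-module Hom_C(T,X): vertex i carries Hom_C(T_i, X); arrow (i,j,mu)
  acts by precomposition with mu : T_j -> T_i.\<close>
definition hom_rep :: "int \<Rightarrow> obj list \<Rightarrow> obj \<Rightarrow> (bas, 'k::field) qrep" where
  "hom_rep n T X = (\<lambda>i. if i < length T then HB n (T ! i) X else {},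
     \<lambda>\<alpha> b' b. if bcomp n (T ! atgt \<alpha>) (T ! asrc \<alpha>) X b (snd (snd \<alpha>)) = Some b' then 1 else 0)"

text \<open>Vertices of summands of T in R^*(X) (nonzero *-map T_i -> X).\<close>
definition RV :: "int \<Rightarrow> obj list \<Rightarrow> obj \<Rightarrow> tag \<Rightarrow> nat set" where
  "RV n T X t = {i. i < length T \<and> (\<exists>m. (t, m) \<in> HB n (T ! i) X)}"

definition sigma :: "int \<Rightarrow> obj list \<Rightarrow> obj \<Rightarrow> tag \<Rightarrow> str option" where
  "sigma n T X t = (if RV n T X t = {} then None else
     Some (THE \<sigma>. is_string n T \<sigma> \<and> distinct (svtx \<sigma>) \<and> set (svtx \<sigma>) = RV n T X t \<and>
        (\<forall>i\<in>RV n T X t. snd (T ! i) \<le> snd (T ! last (svtx \<sigma>)))))"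

definition hom_zero :: "int \<Rightarrow> obj list \<Rightarrow> obj \<Rightarrow> bool" where
  "hom_zero n T X \<longleftrightarrow> (\<forall>i < length T. HB n (T ! i) X = {})"

end

theory Submission
  imports Defs
begin

definition wing :: "int \<Rightarrow> obj \<Rightarrow> bool" where
  "wing n Y \<longleftrightarrow> 1 \<le> fst Y \<and> 1 \<le> snd Y \<and> fst Y + snd Y \<le> n"

definition crossR :: "obj \<Rightarrow> obj \<Rightarrow> bool" where
  "crossR Y Z \<longleftrightarrow> fst Y < fst Z \<and> fst Z \<le> fst Y + snd Y \<and> fst Y + snd Y < fst Z + snd Z"

lemma modeq:
  fixes x y n :: int
  assumes "0 < n" "x mod n = y mod n" "y - 2*n < x" "x < y + 2*n"
  shows "x = y \<or> x = y + n \<or> x = y - n"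
proof -
  have "n dvd (x - y)" using assms(2) by (simp add: mod_eq_dvd_iff)
  then obtain k where k: "x - y = n * k" by (auto elim: dvdE)
  have "n * k < n * 2" using assms k by linarith
  hence "k < 2" using assms(1) by (simp add: mult_less_cancel_left)
  moreover have "n * (-2) < n * k" using assms k by linarith
  hence "-2 < k" using assms(1) by (metis mult_less_cancel_left_pos)
  ultimately have "k = -1 \<or> k = 0 \<or> k = 1" by linarith
  thus ?thesis using k by auto
qed

lemma md_mod: "0 < n \<Longrightarrow> md n x mod n = x mod n"
  unfolding md_def by (simp add: mod_add_left_eq)

lemma md_bounds: "0 < n \<Longrightarrow> 1 \<le> md n x \<and> md n x \<le> n"
  unfolding md_def using pos_mod_bound[of n "x - 1"] pos_mod_sign[of n "x - 1"] by linarith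

lemma md_diff: "0 < n \<Longrightarrow> (x - md n y) mod n = (x - y) mod n"
  by (metis md_mod mod_diff_right_eq)

lemma md_add: "0 < n \<Longrightarrow> (md n y + x) mod n = (y + x) mod n"
  by (metis md_mod mod_add_left_eq)

lemma tau2_mod: "0 < n \<Longrightarrow> (x - fst (tau n (tau n Y))) mod n = (x - fst Y + 2) mod n"
proof -
  assume n: "0 < n"
  have "(x - fst (tau n (tau n Y))) mod n = (x - (md n (fst Y - 1) - 1)) mod n"
    by (simp add: tau_def md_diff[OF n])
  also have "\<dots> = ((x + 1) - md n (fst Y - 1)) mod n" by (simp add: algebra_simps)
  also have "\<dots> = (x - fst Y + 2) mod n" by (simp add: md_diff[OF n] algebra_simps)
  finally show ?thesis .
qed

lemma BT_mem: "i \<in> BT n X Y \<longleftrightarrow> 1 \<le> i \<and> i \<le> snd X \<and> i \<le> snd Y \<and> i mod n = (fst X + snd X - fst Y) mod n"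
  by (auto simp: BT_def)

lemma HB_TM: "(TM, m) \<in> HB n X Y \<longleftrightarrow> m \<in> BT n X Y"
  by (auto simp: HB_def)
lemma HB_DM: "(DM, m) \<in> HB n X Y \<longleftrightarrow> m \<in> BT n Y (tau n (tau n X))"
  by (auto simp: HB_def)

lemma TM_wing:
  assumes n: "n \<ge> 2" and Y: "wing n Y" and Z: "wing n Z"
  shows "(TM, m) \<in> HB n Y Z \<longleftrightarrow> fst Y \<le> fst Z \<and> fst Z < fst Y + snd Y \<and>
           fst Y + snd Y \<le> fst Z + snd Z \<and> m = fst Y + snd Y - fst Z"
proof
  assume "(TM, m) \<in> HB n Y Z"
  hence m: "1 \<le> m" "m \<le> snd Y" "m \<le> snd Z" "m mod n = (fst Y + snd Y - fst Z) mod n"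
    by (auto simp: HB_TM BT_mem)
  have "m = fst Y + snd Y - fst Z \<or> m = fst Y + snd Y - fst Z + n \<or> m = fst Y + snd Y - fst Z - n"
    apply (rule modeq) using n Y Z m unfolding wing_def by linarith+
  thus "fst Y \<le> fst Z \<and> fst Z < fst Y + snd Y \<and>
           fst Y + snd Y \<le> fst Z + snd Z \<and> m = fst Y + snd Y - fst Z"
    using m Y Z unfolding wing_def by auto
next
  assume "fst Y \<le> fst Z \<and> fst Z < fst Y + snd Y \<and>
           fst Y + snd Y \<le> fst Z + snd Z \<and> m = fst Y + snd Y - fst Z"
  thus "(TM, m) \<in> HB n Y Z" by (auto simp: HB_TM BT_mem)
qed

lemma DM_nested:
  assumes n: "n \<ge> 2" and Y: "wing n Y" and Z: "wing n Z" and h: "(DM, m) \<in> HB n Y Z"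
    and nest: "(fst Y \<le> fst Z \<and> fst Z + snd Z \<le> fst Y + snd Y) \<or> (fst Z \<le> fst Y \<and> fst Y + snd Y \<le> fst Z + snd Z)"
  shows "fst Y = 1 \<and> fst Z + snd Z = n \<and> m = 1"
proof -
  have m: "1 \<le> m" "m \<le> snd Y" "m \<le> snd Z" "m mod n = (fst Z + snd Z - fst Y + 2) mod n"
    using h tau2_mod[of n "fst Z + snd Z" Y] n by (auto simp: HB_DM BT_mem tau_def)
  have "m = fst Z + snd Z - fst Y + 2 \<or> m = fst Z + snd Z - fst Y + 2 + n \<or> m = fst Z + snd Z - fst Y + 2 - n"
    apply (rule modeq) using n Y Z m unfolding wing_def by linarith+
  thus ?thesis using m Y Z nest unfolding wing_def by auto
qed

lemma DM_top:
  assumes n: "n \<ge> 2" and Y: "wing n Y" and Z: "wing n Z" and "fst Y = 1" "fst Z + snd Z = n"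
  shows "(DM, 1) \<in> HB n Y Z"
proof -
  have "(1::int) mod n = (fst Z + snd Z - fst Y + 2) mod n" using assms by simp
  thus ?thesis using tau2_mod[of n "fst Z + snd Z" Y] n Y Z unfolding wing_def
    by (auto simp: HB_DM BT_mem tau_def)
qed

lemma cross_ex:
  assumes n: "n \<ge> 2" and Y: "wing n Y" and Z: "wing n Z"
  shows "(\<exists>i. 1 \<le> i \<and> i \<le> snd Y \<and> i \<le> snd Z \<and> i mod n = (fst Y + snd Y - fst Z + 1) mod n)
     \<longleftrightarrow> crossR Y Z"
proof
  assume "\<exists>i. 1 \<le> i \<and> i \<le> snd Y \<and> i \<le> snd Z \<and> i mod n = (fst Y + snd Y - fst Z + 1) mod n"
  then obtain i where m: "1 \<le> i" "i \<le> snd Y" "i \<le> snd Z" "i mod n = (fst Y + snd Y - fst Z + 1) mod n"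
    by blast
  have "i = fst Y + snd Y - fst Z + 1 \<or> i = fst Y + snd Y - fst Z + 1 + n \<or> i = fst Y + snd Y - fst Z + 1 - n"
    apply (rule modeq) using n Y Z m unfolding wing_def by linarith+
  thus "crossR Y Z" using m Y Z unfolding wing_def crossR_def by auto
next
  assume "crossR Y Z"
  thus "\<exists>i. 1 \<le> i \<and> i \<le> snd Y \<and> i \<le> snd Z \<and> i mod n = (fst Y + snd Y - fst Z + 1) mod n"
    unfolding crossR_def by (intro exI[of _ "fst Y + snd Y - fst Z + 1"]) auto
qed

lemma finite_BT: "finite (BT n X Y)"
  by (rule finite_subset[of _ "{1..snd X}"]) (auto simp: BT_def)

lemma finite_HB: "finite (HB n X Y)"
proof -
  have "HB n X Y \<subseteq> (\<lambda>i. (TM, i)) ` BT n X Y \<union> (\<lambda>i. (DM, i)) ` BT n Y (tau n (tau n X))"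
    by (auto simp: HB_def)
  thus ?thesis using finite_BT by (meson finite_Un finite_imageI finite_subset)
qed

lemma ext0:
  assumes n: "n \<ge> 2" and Y: "wing n Y" and Z: "wing n Z"
  shows "ext1dim n Y Z = 0 \<longleftrightarrow> \<not> crossR Y Z \<and> \<not> crossR Z Y"
proof -
  have n0: "0 < n" using n by simp
  have e1: "(\<exists>i. i \<in> BT n Y (tau n Z)) \<longleftrightarrow> crossR Y Z"
  proof -
    have "\<And>i. i \<in> BT n Y (tau n Z) \<longleftrightarrow> 1 \<le> i \<and> i \<le> snd Y \<and> i \<le> snd Z \<and> i mod n = (fst Y + snd Y - fst Z + 1) mod n"
    proof -
      fix i
      have "(fst Y + snd Y - md n (fst Z - 1)) mod n = (fst Y + snd Y - fst Z + 1) mod n"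
        by (simp add: md_diff[OF n0] algebra_simps)
      thus "i \<in> BT n Y (tau n Z) \<longleftrightarrow> 1 \<le> i \<and> i \<le> snd Y \<and> i \<le> snd Z \<and> i mod n = (fst Y + snd Y - fst Z + 1) mod n"
        by (simp add: BT_mem tau_def)
    qed
    thus ?thesis using cross_ex[OF n Y Z] by simp
  qed
  have e2: "(\<exists>i. i \<in> BT n (tau n Z) (tau n (tau n Y))) \<longleftrightarrow> crossR Z Y"
  proof -
    have "\<And>i. i \<in> BT n (tau n Z) (tau n (tau n Y)) \<longleftrightarrow> 1 \<le> i \<and> i \<le> snd Z \<and> i \<le> snd Y \<and> i mod n = (fst Z + snd Z - fst Y + 1) mod n"
    proof -
      fix i
      have "(md n (fst Z - 1) + snd Z - fst (tau n (tau n Y))) mod n = (md n (fst Z - 1) + (snd Z - fst Y + 2)) mod n"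
        using tau2_mod[OF n0, of "md n (fst Z - 1) + snd Z" Y] by (simp add: algebra_simps)
      also have "\<dots> = (fst Z - 1 + (snd Z - fst Y + 2)) mod n" by (rule md_add[OF n0])
      also have "\<dots> = (fst Z + snd Z - fst Y + 1) mod n" by (simp add: algebra_simps)
      finally show "i \<in> BT n (tau n Z) (tau n (tau n Y)) \<longleftrightarrow> 1 \<le> i \<and> i \<le> snd Z \<and> i \<le> snd Y \<and> i mod n = (fst Z + snd Z - fst Y + 1) mod n"
        by (simp add: BT_mem tau_def)
    qed
    thus ?thesis using cross_ex[OF n Z Y] by simp
  qed
  have "ext1dim n Y Z = 0 \<longleftrightarrow> HB n Y (tau n Z) = {}"
    unfolding ext1dim_def using finite_HB by simp
  also have "\<dots> \<longleftrightarrow> \<not> (\<exists>i. i \<in> BT n Y (tau n Z)) \<and> \<not> (\<exists>i. i \<in> BT n (tau n Z) (tau n (tau n Y)))"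
    by (auto simp: HB_def)
  finally show ?thesis using e1 e2 by simp
qed


lemma TM_X:
  assumes n: "n \<ge> 2" and Y: "wing n Y" and a: "1 \<le> a" "a \<le> n" and b: "n \<le> b"
  shows "(TM, m) \<in> HB n Y (a, b) \<longleftrightarrow> fst Y \<le> a \<and> a < fst Y + snd Y \<and> m = fst Y + snd Y - a"
proof
  assume "(TM, m) \<in> HB n Y (a, b)"
  hence m: "1 \<le> m" "m \<le> snd Y" "m \<le> b" "m mod n = (fst Y + snd Y - a) mod n"
    by (auto simp: HB_TM BT_mem)
  have "m = fst Y + snd Y - a \<or> m = fst Y + snd Y - a + n \<or> m = fst Y + snd Y - a - n"
    apply (rule modeq) using n Y m a unfolding wing_def by linarith+
  thus "fst Y \<le> a \<and> a < fst Y + snd Y \<and> m = fst Y + snd Y - a"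
    using m Y a unfolding wing_def by auto
next
  assume "fst Y \<le> a \<and> a < fst Y + snd Y \<and> m = fst Y + snd Y - a"
  thus "(TM, m) \<in> HB n Y (a, b)" using Y b n unfolding wing_def by (auto simp: HB_TM BT_mem)
qed

lemma DM_X:
  assumes n: "n \<ge> 2" and Y: "wing n Y" and a: "1 \<le> a" "a \<le> n" and b: "n \<le> b"
  shows "(DM, m) \<in> HB n Y (a, b) \<longleftrightarrow> fst Y \<le> md n (a + b + 1) \<and> md n (a + b + 1) < fst Y + snd Y
            \<and> m = md n (a + b + 1) + 1 - fst Y"
proof -
  have n0: "0 < n" using n by simp
  define p where "p = md n (a + b + 1)"
  have p: "1 \<le> p" "p \<le> n" using md_bounds[OF n0] unfolding p_def by auto
  have pm: "(p + (1 - fst Y)) mod n = (a + b + 1 + (1 - fst Y)) mod n"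
    unfolding p_def by (rule md_add[OF n0])
  have eq: "(a + b - fst (tau n (tau n Y))) mod n = (p + 1 - fst Y) mod n"
    using tau2_mod[OF n0, of "a + b" Y] pm by (simp add: algebra_simps)
  have "(DM, m) \<in> HB n Y (a, b) \<longleftrightarrow> 1 \<le> m \<and> m \<le> b \<and> m \<le> snd Y \<and> m mod n = (p + 1 - fst Y) mod n"
    using eq by (simp add: HB_DM BT_mem tau_def)
  also have "\<dots> \<longleftrightarrow> fst Y \<le> p \<and> p < fst Y + snd Y \<and> m = p + 1 - fst Y"
  proof
    assume m: "1 \<le> m \<and> m \<le> b \<and> m \<le> snd Y \<and> m mod n = (p + 1 - fst Y) mod n"
    have "m = p + 1 - fst Y \<or> m = p + 1 - fst Y + n \<or> m = p + 1 - fst Y - n"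
      apply (rule modeq) using n Y m p unfolding wing_def by linarith+
    thus "fst Y \<le> p \<and> p < fst Y + snd Y \<and> m = p + 1 - fst Y"
      using m Y p unfolding wing_def by auto
  next
    assume "fst Y \<le> p \<and> p < fst Y + snd Y \<and> m = p + 1 - fst Y"
    thus "1 \<le> m \<and> m \<le> b \<and> m \<le> snd Y \<and> m mod n = (p + 1 - fst Y) mod n"
      using Y b n unfolding wing_def by auto
  qed
  finally show ?thesis unfolding p_def .
qed

lemma wing_of_rigid:
  assumes n: "n \<ge> 2" and Y: "indec n Y" and e1: "ext1dim n Y Y = 0" and e2: "ext1dim n Y (1, n - 1) = 0"
  shows "wing n Y"
proof -
  have n0: "0 < n" using n by simp
  have d: "snd Y \<le> n - 1"
  proof (rule ccontr)
    assume "\<not> snd Y \<le> n - 1"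
    hence dn: "n \<le> snd Y" by simp
    define i where "i = snd Y mod n + 1"
    have "(fst Y + snd Y - md n (fst Y - 1)) mod n = (snd Y + 1) mod n"
      using md_diff[OF n0, of "fst Y + snd Y" "fst Y - 1"] by (simp add: algebra_simps)
    moreover have "i mod n = (snd Y + 1) mod n" unfolding i_def by (simp add: mod_add_left_eq)
    moreover have "1 \<le> i" "i \<le> snd Y" unfolding i_def using pos_mod_bound[OF n0, of "snd Y"] pos_mod_sign[OF n0, of "snd Y"] dn by linarith+
    ultimately have "(TM, i) \<in> HB n Y (tau n Y)" by (simp add: HB_TM BT_mem tau_def)
    hence "HB n Y (tau n Y) \<noteq> {}" by blast
    thus False using e1 finite_HB unfolding ext1dim_def by simp
  qed
  have s: "fst Y + snd Y \<le> n"
  proof (rule ccontr)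
    assume "\<not> fst Y + snd Y \<le> n"
    define i where "i = fst Y + snd Y - n"
    have "(fst Y + snd Y - md n (1 - 1)) mod n = (fst Y + snd Y) mod n"
      using md_diff[OF n0, of "fst Y + snd Y" "1 - 1"] by simp
    moreover have "i mod n = (fst Y + snd Y) mod n" unfolding i_def by simp
    moreover have "1 \<le> i" "i \<le> snd Y" "i \<le> n - 1" unfolding i_def using \<open>\<not> fst Y + snd Y \<le> n\<close> Y d
      unfolding indec_def by linarith+
    ultimately have "(TM, i) \<in> HB n Y (tau n (1, n - 1))" by (simp add: HB_TM BT_mem tau_def)
    hence "HB n Y (tau n (1, n - 1)) \<noteq> {}" by blast
    thus False using e2 finite_HB unfolding ext1dim_def by simp
  qed
  show ?thesis using Y s unfolding indec_def wing_def by simp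
qed

locale mr =
  fixes n :: int and T :: "obj list"
  assumes n2: "n \<ge> 2" and wT: "\<And>Y. Y \<in> set T \<Longrightarrow> wing n Y"
    and cT: "\<And>Y Z. Y \<in> set T \<Longrightarrow> Z \<in> set T \<Longrightarrow> \<not> crossR Y Z"
    and maxT: "\<And>K. wing n K \<Longrightarrow> (\<And>Y. Y \<in> set T \<Longrightarrow> \<not> crossR K Y \<and> \<not> crossR Y K) \<Longrightarrow> K \<in> set T"
    and dT: "distinct T" and topT: "(1, n - 1) \<in> set T"

lemma mr_from:
  assumes n: "n \<ge> 2" and mr: "max_rigid n T" and d: "distinct T" and top: "(1, n - 1) \<in> set T"
  shows "mr n T"
proof -
  have ind: "\<And>Y. Y \<in> set T \<Longrightarrow> indec n Y" and rig: "\<And>Y Z. Y \<in> set T \<Longrightarrow> Z \<in> set T \<Longrightarrow> ext1dim n Y Z = 0"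
    and mx: "\<And>Xs. (\<forall>Y\<in>set Xs. indec n Y) \<Longrightarrow> rigid n (T @ Xs) \<Longrightarrow> set Xs \<subseteq> set T"
    using mr unfolding max_rigid_def rigid_def by blast+
  have w: "\<And>Y. Y \<in> set T \<Longrightarrow> wing n Y"
    using wing_of_rigid[OF n] ind rig top by blast
  show ?thesis
  proof
    show "n \<ge> 2" by fact
    show "\<And>Y. Y \<in> set T \<Longrightarrow> wing n Y" by (rule w)
    show "\<And>Y Z. Y \<in> set T \<Longrightarrow> Z \<in> set T \<Longrightarrow> \<not> crossR Y Z"
      using ext0[OF n] w rig by blast
    show "distinct T" by fact
    show "(1, n - 1) \<in> set T" by fact
    fix K assume K: "wing n K" and c: "\<And>Y. Y \<in> set T \<Longrightarrow> \<not> crossR K Y \<and> \<not> crossR Y K"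
    have "indec n K" using K n unfolding wing_def indec_def by simp
    moreover have "rigid n (T @ [K])"
      unfolding rigid_def
    proof (intro ballI)
      fix Y Z assume "Y \<in> set (T @ [K])" "Z \<in> set (T @ [K])"
      hence Y: "Y \<in> set T \<or> Y = K" and Z: "Z \<in> set T \<or> Z = K" by auto
      have wY: "wing n Y" using Y w K by blast
      have wZ: "wing n Z" using Z w K by blast
      have "\<not> crossR Y Z \<and> \<not> crossR Z Y"
        using Y Z c ext0[OF n] w rig unfolding crossR_def by blast
      thus "ext1dim n Y Z = 0" using ext0[OF n wY wZ] by simp
    qed
    ultimately have "set [K] \<subseteq> set T" using mx[of "[K]"] by simp
    thus "K \<in> set T" by simp
  qed
qed


lemma bcomp_TM_cases:
  assumes "bcomp n X Y Z g f = Some (TM, s)"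
  shows "\<exists>gi fi. g = (TM, gi) \<and> f = (TM, fi)"
proof -
  obtain tg gi where g: "g = (tg, gi)" by (cases g)
  obtain tf fi where f: "f = (tf, fi)" by (cases f)
  show ?thesis using assms unfolding g f
    by (cases tg; cases tf) (auto simp: Let_def split: if_splits)
qed

context mr
begin

definition lo :: "nat \<Rightarrow> int" where "lo i = fst (T ! i)"
definition en :: "nat \<Rightarrow> int" where "en i = fst (T ! i) + snd (T ! i)"

lemma wi: "i < length T \<Longrightarrow> 1 \<le> lo i \<and> lo i < en i \<and> en i \<le> n \<and> snd (T ! i) = en i - lo i"
  using wT[of "T ! i"] unfolding wing_def lo_def en_def by auto

lemma wingi: "i < length T \<Longrightarrow> wing n (T ! i)"
  using wT by auto

lemma ci: "i < length T \<Longrightarrow> j < length T \<Longrightarrow> \<not> (lo i < lo j \<and> lo j \<le> en i \<and> en i < en j)"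
  using cT[of "T ! i" "T ! j"] unfolding crossR_def lo_def en_def by auto

lemma eqi: "i < length T \<Longrightarrow> j < length T \<Longrightarrow> lo i = lo j \<Longrightarrow> en i = en j \<Longrightarrow> i = j"
proof -
  assume h: "i < length T" "j < length T" "lo i = lo j" "en i = en j"
  have "T ! i = T ! j" using h unfolding lo_def en_def by (simp add: prod_eq_iff)
  thus "i = j" using dT h nth_eq_iff_index_eq by blast
qed

lemma TMi: "i < length T \<Longrightarrow> j < length T \<Longrightarrow>
   (TM, m) \<in> HB n (T ! j) (T ! i) \<longleftrightarrow> lo j \<le> lo i \<and> lo i < en j \<and> en j \<le> en i \<and> m = en j - lo i"
  using TM_wing[OF n2 wingi wingi, of j i m] unfolding lo_def en_def by simp

lemma radB_TM: "i < length T \<Longrightarrow> j < length T \<Longrightarrow>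
   (TM, m) \<in> radB n T i j \<longleftrightarrow> i \<noteq> j \<and> lo j \<le> lo i \<and> lo i < en j \<and> en j \<le> en i \<and> m = en j - lo i"
  unfolding radB_def using TMi[of i j m] wi[of i] by auto

lemma ArrTM:
  "(i, j, (TM, s)) \<in> Arr n T \<longleftrightarrow> i < length T \<and> j < length T \<and> i \<noteq> j \<and>
     lo j \<le> lo i \<and> lo i < en j \<and> en j \<le> en i \<and> s = en j - lo i \<and>
     \<not> (\<exists>k < length T. k \<noteq> i \<and> k \<noteq> j \<and> lo j \<le> lo k \<and> lo k \<le> lo i \<and> en j \<le> en k \<and> en k \<le> en i)"
  (is "?L \<longleftrightarrow> ?R")
proof
  assume L: ?L
  hence ij: "i < length T" "j < length T" and r: "(TM, s) \<in> radB n T i j" and nr: "(TM, s) \<notin> rad2B n T i j"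
    unfolding Arr_def by auto
  have b: "i \<noteq> j \<and> lo j \<le> lo i \<and> lo i < en j \<and> en j \<le> en i \<and> s = en j - lo i"
    using r radB_TM[OF ij] by simp
  have "\<not> (\<exists>k < length T. k \<noteq> i \<and> k \<noteq> j \<and> lo j \<le> lo k \<and> lo k \<le> lo i \<and> en j \<le> en k \<and> en k \<le> en i)"
  proof
    assume "\<exists>k < length T. k \<noteq> i \<and> k \<noteq> j \<and> lo j \<le> lo k \<and> lo k \<le> lo i \<and> en j \<le> en k \<and> en k \<le> en i"
    then obtain k where k: "k < length T" "k \<noteq> i" "k \<noteq> j" "lo j \<le> lo k" "lo k \<le> lo i" "en j \<le> en k" "en k \<le> en i"
      by blast
    have d: "(TM, en j - lo k) \<in> radB n T k j" using radB_TM[OF k(1) ij(2)] k b by auto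
    have g: "(TM, en k - lo i) \<in> radB n T i k" using radB_TM[OF ij(1) k(1)] k b by auto
    have "bcomp n (T ! j) (T ! k) (T ! i) (TM, en k - lo i) (TM, en j - lo k) = Some (TM, s)"
      using wi[OF k(1)] b r unfolding radB_def by (simp add: Let_def)
    hence "(TM, s) \<in> rad2B n T i j" unfolding rad2B_def using k(1) d g by blast
    thus False using nr by simp
  qed
  thus ?R using ij b by blast
next
  assume R: ?R
  have r: "(TM, s) \<in> radB n T i j" using R radB_TM[of i j s] by simp
  have "(TM, s) \<notin> rad2B n T i j"
  proof
    assume "(TM, s) \<in> rad2B n T i j"
    then obtain k g f where k: "k < length T" "f \<in> radB n T k j" "g \<in> radB n T i k"
      "bcomp n (T ! j) (T ! k) (T ! i) g f = Some (TM, s)"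
      unfolding rad2B_def by blast
    obtain gi fi where gf: "g = (TM, gi)" "f = (TM, fi)" using bcomp_TM_cases[OF k(4)] by blast
    have "k \<noteq> j \<and> lo j \<le> lo k \<and> lo k < en j \<and> en j \<le> en k"
      using k(2) radB_TM[OF k(1), of j fi] R gf by simp
    moreover have "k \<noteq> i \<and> lo k \<le> lo i \<and> lo i < en k \<and> en k \<le> en i"
      using k(3) radB_TM[of i k gi] R k(1) gf by simp
    ultimately show False using R k(1) by blast
  qed
  thus ?L using R r unfolding Arr_def by auto
qed

lemma top_ex: "\<exists>t < length T. lo t = 1 \<and> en t = n"
proof -
  obtain t where "t < length T" "T ! t = (1, n - 1)" using topT by (metis in_set_conv_nth)
  thus ?thesis unfolding lo_def en_def by (intro exI[of _ t]) auto
qed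

lemma ArrDM:
  assumes A: "(i, j, (DM, s)) \<in> Arr n T" and ij: "i \<noteq> j"
    and nest: "(lo j \<le> lo i \<and> en i \<le> en j) \<or> (lo i \<le> lo j \<and> en j \<le> en i)"
  shows False
proof -
  have il: "i < length T" "j < length T" and r: "(DM, s) \<in> radB n T i j" and nr: "(DM, s) \<notin> rad2B n T i j"
    using A unfolding Arr_def by auto
  have h: "(DM, s) \<in> HB n (T ! j) (T ! i)" using r unfolding radB_def by auto
  have dm: "lo j = 1 \<and> en i = n \<and> s = 1"
    using DM_nested[OF n2 wingi[OF il(2)] wingi[OF il(1)] h] nest unfolding lo_def en_def by auto
  have wj: "1 \<le> lo j \<and> lo j < en j \<and> en j \<le> n \<and> snd (T ! j) = en j - lo j" using wi[OF il(2)] .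
  have wii: "1 \<le> lo i \<and> lo i < en i \<and> en i \<le> n \<and> snd (T ! i) = en i - lo i" using wi[OF il(1)] .
  have "(DM, s) \<in> rad2B n T i j"
  proof (cases "lo i = 1")
    case True
    have loop: "(DM, 1) \<in> radB n T i i"
      using DM_top[OF n2 wingi[OF il(1)] wingi[OF il(1)]] True dm unfolding radB_def lo_def en_def by auto
    have d: "(TM, en j - 1) \<in> radB n T i j" using radB_TM[OF il] ij dm wj wii nest True by auto
    have "bcomp n (T ! j) (T ! i) (T ! i) (DM, 1) (TM, en j - 1) = Some (DM, s)"
      using h dm wj by (simp add: Let_def)
    thus ?thesis unfolding rad2B_def using il loop d by blast
  next
    case False
    hence ej: "en j = n" using nest dm wii wj by auto
    have loop: "(DM, 1) \<in> radB n T j j"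
      using DM_top[OF n2 wingi[OF il(2)] wingi[OF il(2)]] ej dm unfolding radB_def lo_def en_def by auto
    have g: "(TM, n - lo i) \<in> radB n T i j" using radB_TM[OF il] ij dm wj wii ej by auto
    have "bcomp n (T ! j) (T ! j) (T ! i) (TM, n - lo i) (DM, 1) = Some (DM, s)"
      using h dm wii by (simp add: Let_def)
    thus ?thesis unfolding rad2B_def using il loop g by blast
  qed
  thus False using nr by simp
qed

definition P1 :: "arrow list \<Rightarrow> bool" where
  "P1 ps \<longleftrightarrow> (\<forall>k. Suc k < length ps \<longrightarrow> atgt (ps ! k) = asrc (ps ! Suc k))"

definition P2 :: "nat \<Rightarrow> arrow list \<Rightarrow> bool" where
  "P2 e ps \<longleftrightarrow> (\<forall>\<alpha>\<in>set ps. asrc \<alpha> < length T \<and> atgt \<alpha> < length T \<and>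
      snd (snd \<alpha>) = (TM, en (atgt \<alpha>) - lo (asrc \<alpha>)) \<and>
      lo e \<le> lo (asrc \<alpha>) \<and> lo (asrc \<alpha>) < en e \<and> en e \<le> en (asrc \<alpha>))"

lemma pc_TM:
  "ps \<noteq> [] \<Longrightarrow> P1 ps \<Longrightarrow> P2 e ps \<Longrightarrow> atgt (last ps) = e \<Longrightarrow> e < length T \<Longrightarrow>
   pc n T ps = Some (TM, en e - lo (asrc (hd ps)))"
proof (induction ps)
  case Nil thus ?case by simp
next
  case (Cons x ps)
  obtain i j \<mu> where x: "x = (i, j, \<mu>)" by (cases x)
  show ?case
  proof (cases ps)
    case Nil
    thus ?thesis using Cons.prems unfolding x P2_def by (simp add: asrc_def atgt_def)
  next
    case (Cons b rest)
    have P1t: "P1 ps" using Cons.prems(2) unfolding P1_def by auto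
    have P2t: "P2 e ps" using Cons.prems(3) unfolding P2_def by auto
    have lt: "atgt (last ps) = e" using Cons.prems(4) \<open>ps = b # rest\<close> by simp
    have IH: "pc n T ps = Some (TM, en e - lo (asrc (hd ps)))"
      using Cons.IH[OF _ P1t P2t lt Cons.prems(5)] \<open>ps = b # rest\<close> by simp
    have jb: "asrc b = j" using Cons.prems(2) \<open>ps = b # rest\<close> x unfolding P1_def
      by (auto simp: atgt_def) 
    have xi: "i < length T" "j < length T" "\<mu> = (TM, en j - lo i)" "lo e \<le> lo i" "lo i < en e" "en e \<le> en i"
      using Cons.prems(3) x unfolding P2_def by (auto simp: asrc_def atgt_def)
    have wj: "snd (T ! j) = en j - lo j" using wi[OF xi(2)] by simp
    have mem: "(TM, en e - lo i) \<in> HB n (T ! e) (T ! i)"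
      using TMi[OF xi(1) Cons.prems(5)] xi by simp
    have "pc n T (x # ps) = bcomp n (T ! e) (T ! j) (T ! i) \<mu> (TM, en e - lo j)"
      using IH jb lt \<open>ps = b # rest\<close> x by simp
    also have "\<dots> = Some (TM, en e - lo i)" using xi(3) wj mem by (simp add: Let_def)
    finally show ?thesis using x by (simp add: asrc_def)
  qed
qed

end


lemma ex_sorted:
  assumes "finite A" "inj_on f A"
  shows "\<exists>w. distinct w \<and> set w = A \<and> sorted_wrt (\<lambda>i j. (f i :: int) < f j) w"
proof -
  define l where "l = sorted_list_of_set (f ` A)"
  have l: "sorted_wrt (<) l" "set l = f ` A" using assms(1) unfolding l_def by auto
  define w where "w = map (the_inv_into A f) l"
  have "set w = A" unfolding w_def using l(2) the_inv_into_f_f[OF assms(2)] by force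
  moreover have "sorted_wrt (\<lambda>i j. f i < f j) w"
    unfolding w_def sorted_wrt_map
    using l f_the_inv_into_f[OF assms(2)] by (auto intro: sorted_wrt_mono_rel[of _ "(<)"])
  moreover have "distinct w"
  proof -
    have "sorted_wrt (<) (map f w)" using \<open>sorted_wrt (\<lambda>i j. f i < f j) w\<close> by (simp add: sorted_wrt_map)
    hence "distinct (map f w)" by (simp add: strict_sorted_iff)
    thus ?thesis by (simp add: distinct_map)
  qed
  ultimately show ?thesis by blast
qed

lemma eq_run:
  fixes f :: "nat \<Rightarrow> 'a"
  shows "(\<And>k. s \<le> k \<Longrightarrow> k < r \<Longrightarrow> f k = f (Suc k)) \<Longrightarrow> s \<le> k \<Longrightarrow> k \<le> r \<Longrightarrow> f k = f r"
proof (induction r)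
  case 0 thus ?case by simp
next
  case (Suc r)
  show ?case
  proof (cases "k = Suc r")
    case True thus ?thesis by simp
  next
    case False
    hence kr: "k \<le> r" using Suc.prems(3) by simp
    have "f k = f r" by (rule Suc.IH) (use Suc.prems kr in auto)
    also have "f r = f (Suc r)" using Suc.prems(1,2) kr by simp
    finally show ?thesis .
  qed
qed

context mr
begin

definition Ch :: "int \<Rightarrow> nat set" where "Ch q = {i. i < length T \<and> lo i \<le> q \<and> q < en i}"

lemma Ch_fin: "finite (Ch q)" unfolding Ch_def by auto

lemma nest: "i \<in> Ch q \<Longrightarrow> j \<in> Ch q \<Longrightarrow> (lo j \<le> lo i \<and> en i \<le> en j) \<or> (lo i \<le> lo j \<and> en j \<le> en i)"
  unfolding Ch_def using ci[of i j] ci[of j i] by auto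

lemma len_inj: "i \<in> Ch q \<Longrightarrow> j \<in> Ch q \<Longrightarrow> en i - lo i = en j - lo j \<Longrightarrow> i = j"
  using nest[of i q j] eqi[of i j] unfolding Ch_def by auto

definition ws :: "int \<Rightarrow> nat list" where
  "ws q = (SOME w. distinct w \<and> set w = Ch q \<and> sorted_wrt (\<lambda>i j. en i - lo i < en j - lo j) w)"

lemma ws: "distinct (ws q) \<and> set (ws q) = Ch q \<and> sorted_wrt (\<lambda>i j. en i - lo i < en j - lo j) (ws q)"
proof -
  have "inj_on (\<lambda>i. en i - lo i) (Ch q)" using len_inj by (auto intro: inj_onI)
  from ex_sorted[OF Ch_fin this] show ?thesis unfolding ws_def by (rule someI_ex)
qed

lemma W1: "t < length (ws q) \<Longrightarrow> ws q ! t \<in> Ch q"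
  using ws[of q] nth_mem by blast

lemma W1': "t < length (ws q) \<Longrightarrow> ws q ! t < length T"
  using W1 unfolding Ch_def by blast

lemma W2: "t < r \<Longrightarrow> r < length (ws q) \<Longrightarrow> en (ws q ! t) - lo (ws q ! t) < en (ws q ! r) - lo (ws q ! r)"
  using ws[of q] by (simp add: sorted_wrt_iff_nth_less)

lemma W3: "t \<le> r \<Longrightarrow> r < length (ws q) \<Longrightarrow> lo (ws q ! r) \<le> lo (ws q ! t) \<and> en (ws q ! t) \<le> en (ws q ! r)"
proof (cases "t = r")
  case False
  assume "t \<le> r" "r < length (ws q)"
  hence "t < r" using False by simp
  thus ?thesis using W2[OF _ \<open>r < _\<close>, of t] nest[OF W1[of t q] W1[of r q]] \<open>r < _\<close> by auto
qed simp

lemma W4: "i \<in> Ch q \<Longrightarrow> \<exists>t < length (ws q). ws q ! t = i"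
  using ws[of q] by (metis in_set_conv_nth)

lemma Wlen: "t < length (ws q) \<Longrightarrow> r < length (ws q) \<Longrightarrow>
   en (ws q ! t) - lo (ws q ! t) \<le> en (ws q ! r) - lo (ws q ! r) \<Longrightarrow> t \<le> r"
  using W2[of r t q] by force

lemma Wdist: "t < length (ws q) \<Longrightarrow> r < length (ws q) \<Longrightarrow> ws q ! t = ws q ! r \<longleftrightarrow> t = r"
  using ws[of q] nth_eq_iff_index_eq by blast

lemma nobetween:
  assumes s: "Suc s < length (ws q)" and k: "k < length T"
    and h: "lo (ws q ! Suc s) \<le> lo k" "lo k \<le> lo (ws q ! s)" "en (ws q ! s) \<le> en k" "en k \<le> en (ws q ! Suc s)"
  shows "k = ws q ! s \<or> k = ws q ! Suc s"
proof -
  have "ws q ! s \<in> Ch q" using W1 s by simp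
  hence "k \<in> Ch q" using k h unfolding Ch_def by auto
  then obtain t where t: "t < length (ws q)" "ws q ! t = k" using W4 by blast
  have "s \<le> t" using Wlen[OF _ t(1), of s] s h t(2) by simp
  moreover have "t \<le> Suc s" using Wlen[OF t(1) s] h t(2) by simp
  ultimately have "t = s \<or> t = Suc s" by auto
  thus ?thesis using t by auto
qed

lemma share:
  assumes s: "Suc s < length (ws q)"
  shows "lo (ws q ! s) = lo (ws q ! Suc s) \<or> en (ws q ! s) = en (ws q ! Suc s)"
proof -
  define J where "J = ws q ! s"
  define I where "I = ws q ! Suc s"
  have JI: "J < length T" "I < length T" unfolding J_def I_def using W1' s by auto
  have nb0: "\<And>k. k < length T \<Longrightarrow> lo I \<le> lo k \<Longrightarrow> lo k \<le> lo J \<Longrightarrow> en J \<le> en k \<Longrightarrow> en k \<le> en I \<Longrightarrow> k = J \<or> k = I"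
    using nobetween[OF s] unfolding J_def I_def by blast
  have sub: "lo I \<le> lo J \<and> en J \<le> en I" using W3[OF _ s, of s] unfolding J_def I_def by simp
  have wJ: "1 \<le> lo J \<and> lo J < en J \<and> en J \<le> n" using wi[OF JI(1)] by simp
  have wI: "1 \<le> lo I \<and> lo I < en I \<and> en I \<le> n" using wi[OF JI(2)] by simp
  have "lo J = lo I \<or> en J = en I"
  proof (rule ccontr)
    assume "\<not> (lo J = lo I \<or> en J = en I)"
    hence st: "lo I < lo J" "en J < en I" using sub by auto
    define K where "K = (lo J, en I - lo J)"
    have wK: "wing n K" unfolding K_def wing_def using wJ wI st by simp
    have "K \<in> set T"
    proof (rule maxT[OF wK])
      fix Y assume "Y \<in> set T"
      then obtain k where k: "k < length T" "T ! k = Y" by (metis in_set_conv_nth)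
      have lk: "lo k = fst Y" "en k = fst Y + snd Y" unfolding lo_def en_def using k by auto
      have nb: "lo I \<le> lo k \<Longrightarrow> lo k \<le> lo J \<Longrightarrow> en J \<le> en k \<Longrightarrow> en k \<le> en I \<Longrightarrow>
          (lo k = lo J \<and> en k = en J) \<or> (lo k = lo I \<and> en k = en I)"
        using nb0[OF k(1)] by blast
      have c1: "\<not> (lo k < lo J \<and> lo J \<le> en k \<and> en k < en J)" using ci[OF k(1) JI(1)] .
      have c2: "\<not> (lo J < lo k \<and> lo k \<le> en J \<and> en J < en k)" using ci[OF JI(1) k(1)] .
      have c3: "\<not> (lo k < lo I \<and> lo I \<le> en k \<and> en k < en I)" using ci[OF k(1) JI(2)] .
      have c4: "\<not> (lo I < lo k \<and> lo k \<le> en I \<and> en I < en k)" using ci[OF JI(2) k(1)] .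
      have "\<not> (lo J < lo k \<and> lo k \<le> en I \<and> en I < en k) \<and> \<not> (lo k < lo J \<and> lo J \<le> en k \<and> en k < en I)"
        using c1 c2 c3 c4 nb st wJ wI by smt
      thus "\<not> crossR K Y \<and> \<not> crossR Y K"
        unfolding crossR_def K_def using lk by simp
    qed
    then obtain k where k: "k < length T" "T ! k = K" by (metis in_set_conv_nth)
    have lk: "lo k = lo J" "en k = en I" using k unfolding lo_def en_def K_def by auto
    have "k = J \<or> k = I" using nb0[OF k(1)] lk st by simp
    thus False using lk st by auto
  qed
  thus ?thesis unfolding J_def I_def .
qed

end


context mr
begin

lemma P1_rev:
  assumes "\<And>k. Suc k < length ps \<Longrightarrow> atgt (ps ! Suc k) = asrc (ps ! k)"
  shows "P1 (rev ps)"
  unfolding P1_def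
proof (intro allI impI)
  fix k assume k: "Suc k < length (rev ps)"
  define j where "j = length ps - Suc (Suc k)"
  have j: "length ps - Suc k = Suc j" "Suc j < length ps" using k unfolding j_def by auto
  show "atgt (rev ps ! k) = asrc (rev ps ! Suc k)"
    using k assms[OF j(2)] j unfolding j_def by (simp add: rev_nth)
qed


definition lt :: "int \<Rightarrow> nat \<Rightarrow> letter" where
  "lt q s = (let u = ws q ! s; v = ws q ! Suc s in
     if en u = en v then ((u, v, (TM, en v - lo u)), True) else ((v, u, (TM, en u - lo v)), False))"

definition csig :: "int \<Rightarrow> str" where
  "csig q = (ws q ! 0, map (lt q) [0..<length (ws q) - 1])"

definition Pq :: "int \<Rightarrow> str \<Rightarrow> bool" where
  "Pq q \<sigma> \<longleftrightarrow> is_string n T \<sigma> \<and> distinct (svtx \<sigma>) \<and> set (svtx \<sigma>) = Ch q \<and>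
     (\<forall>i\<in>Ch q. snd (T ! i) \<le> snd (T ! last (svtx \<sigma>)))"

lemma lt_src_tgt: "lsrc (lt q s) = ws q ! s \<and> ltgt (lt q s) = ws q ! Suc s"
  unfolding lt_def Let_def lsrc_def ltgt_def asrc_def atgt_def by simp

lemma lt_arr: "fst (lt q s) = (if en (ws q ! s) = en (ws q ! Suc s)
    then (ws q ! s, ws q ! Suc s, (TM, en (ws q ! Suc s) - lo (ws q ! s)))
    else (ws q ! Suc s, ws q ! s, (TM, en (ws q ! s) - lo (ws q ! Suc s))))"
  "snd (lt q s) \<longleftrightarrow> en (ws q ! s) = en (ws q ! Suc s)"
  unfolding lt_def Let_def by auto

lemma L1: assumes s: "Suc s < length (ws q)" shows "fst (lt q s) \<in> Arr n T"
proof -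
  define u where "u = ws q ! s"
  define v where "v = ws q ! Suc s"
  have uv: "u < length T" "v < length T" "u \<noteq> v" unfolding u_def v_def using W1' s Wdist[of s q "Suc s"] by auto
  have sub: "lo v \<le> lo u \<and> en u \<le> en v" using W3[OF _ s, of s] unfolding u_def v_def by simp
  have wu: "lo u < en u" using wi[OF uv(1)] by simp
  have nb: "\<And>k. k < length T \<Longrightarrow> lo v \<le> lo k \<Longrightarrow> lo k \<le> lo u \<Longrightarrow> en u \<le> en k \<Longrightarrow> en k \<le> en v \<Longrightarrow> k = u \<or> k = v"
    using nobetween[OF s] unfolding u_def v_def by blast
  show ?thesis
  proof (cases "en u = en v")
    case True
    have nk: "\<not> (\<exists>k < length T. k \<noteq> u \<and> k \<noteq> v \<and> lo v \<le> lo k \<and> lo k \<le> lo u \<and> en v \<le> en k \<and> en k \<le> en u)"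
    proof
      assume "\<exists>k < length T. k \<noteq> u \<and> k \<noteq> v \<and> lo v \<le> lo k \<and> lo k \<le> lo u \<and> en v \<le> en k \<and> en k \<le> en u"
      then obtain k where k: "k < length T" "k \<noteq> u" "k \<noteq> v" "lo v \<le> lo k" "lo k \<le> lo u" "en v \<le> en k" "en k \<le> en u" by blast
      have "en u \<le> en k" "en k \<le> en v" using k True by auto
      with nb[OF k(1) k(4) k(5)] k(2,3) show False by blast
    qed
    have "(u, v, (TM, en v - lo u)) \<in> Arr n T"
      unfolding ArrTM using uv sub wu True nk by simp
    thus ?thesis using True unfolding lt_arr u_def v_def by simp
  next
    case False
    hence lu: "lo u = lo v" using share[OF s] unfolding u_def v_def by auto
    have nk: "\<not> (\<exists>k < length T. k \<noteq> v \<and> k \<noteq> u \<and> lo u \<le> lo k \<and> lo k \<le> lo v \<and> en u \<le> en k \<and> en k \<le> en v)"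
    proof
      assume "\<exists>k < length T. k \<noteq> v \<and> k \<noteq> u \<and> lo u \<le> lo k \<and> lo k \<le> lo v \<and> en u \<le> en k \<and> en k \<le> en v"
      then obtain k where k: "k < length T" "k \<noteq> v" "k \<noteq> u" "lo u \<le> lo k" "lo k \<le> lo v" "en u \<le> en k" "en k \<le> en v" by blast
      have "lo v \<le> lo k" "lo k \<le> lo u" using k lu by auto
      with nb[OF k(1)] k(2,3,6,7) show False by blast
    qed
    have "(v, u, (TM, en u - lo v)) \<in> Arr n T"
      unfolding ArrTM using uv sub wu lu nk by simp
    thus ?thesis using False unfolding lt_arr u_def v_def by simp
  qed
qed

lemma svtx_csig: "Ch q \<noteq> {} \<Longrightarrow> svtx (csig q) = ws q"
proof -
  assume "Ch q \<noteq> {}"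
  hence m: "length (ws q) \<ge> 1" using ws[of q] by (cases "ws q") auto
  show ?thesis
  proof (rule nth_equalityI)
    show "length (svtx (csig q)) = length (ws q)" using m unfolding svtx_def csig_def by simp
    fix k assume "k < length (svtx (csig q))"
    hence k: "k < length (ws q)" using m unfolding svtx_def csig_def by simp
    show "svtx (csig q) ! k = ws q ! k"
    proof (cases k)
      case 0 thus ?thesis unfolding svtx_def csig_def by simp
    next
      case (Suc k')
      thus ?thesis using k lt_src_tgt[of q k'] unfolding svtx_def csig_def by (simp add: nth_Cons')
    qed
  qed
qed

lemma seg_map: "r \<le> M \<Longrightarrow> s \<le> r \<Longrightarrow> seg (map f [0..<M]) s r = map f [s..<r]"
  unfolding seg_def by (simp add: drop_map take_map)

lemma zero_direct:
  assumes r: "r < length (ws q)" and sr: "s < r" and all: "\<And>k. s \<le> k \<Longrightarrow> k < r \<Longrightarrow> snd (lt q k)"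
  shows "pc n T (map fst (map (lt q) [s..<r])) \<noteq> None"
proof -
  define w where "w = ws q"
  have enr: "\<And>k. s \<le> k \<Longrightarrow> k < r \<Longrightarrow> en (w ! k) = en (w ! Suc k)" using all lt_arr(2) unfolding w_def by blast
  have ene: "\<And>k. s \<le> k \<Longrightarrow> k \<le> r \<Longrightarrow> en (w ! k) = en (w ! r)"
  proof -
    fix k assume "s \<le> k" "k \<le> r"
    show "en (w ! k) = en (w ! r)" using eq_run[of s r "\<lambda>k. en (w ! k)" k] enr \<open>s \<le> k\<close> \<open>k \<le> r\<close> by simp
  qed
  have fa: "\<And>k. s \<le> k \<Longrightarrow> k < r \<Longrightarrow> fst (lt q k) = (w ! k, w ! Suc k, (TM, en (w ! Suc k) - lo (w ! k)))"
    using enr lt_arr(1) unfolding w_def by simp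
  define ps where "ps = map fst (map (lt q) [s..<r])"
  have len: "length ps = r - s" unfolding ps_def by simp
  have nth: "\<And>k. k < r - s \<Longrightarrow> ps ! k = (w ! (s + k), w ! Suc (s + k), (TM, en (w ! Suc (s + k)) - lo (w ! (s + k))))"
    unfolding ps_def using fa by simp
  have P1: "P1 ps" unfolding P1_def len using nth by (simp add: asrc_def atgt_def)
  have P2: "P2 (w ! r) ps"
    unfolding P2_def
  proof
    fix \<alpha> assume "\<alpha> \<in> set ps"
    then obtain k where k: "s \<le> k" "k < r" "\<alpha> = fst (lt q k)" unfolding ps_def by auto
    have a: "\<alpha> = (w ! k, w ! Suc k, (TM, en (w ! Suc k) - lo (w ! k)))" using fa k by simp
    have "lo (w ! r) \<le> lo (w ! k) \<and> en (w ! k) \<le> en (w ! r)" using W3[of k r q] k r unfolding w_def by simp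
    moreover have "lo (w ! k) < en (w ! k)" using wi[OF W1'[of k q]] k r unfolding w_def by simp
    moreover have "en (w ! k) = en (w ! r)" using ene[of k] k by simp
    moreover have "w ! k < length T" "w ! Suc k < length T" using W1' k r unfolding w_def by auto
    ultimately show "asrc \<alpha> < length T \<and> atgt \<alpha> < length T \<and>
      snd (snd \<alpha>) = (TM, en (atgt \<alpha>) - lo (asrc \<alpha>)) \<and>
      lo (w ! r) \<le> lo (asrc \<alpha>) \<and> lo (asrc \<alpha>) < en (w ! r) \<and> en (w ! r) \<le> en (asrc \<alpha>)"
      using a by (simp add: asrc_def atgt_def)
  qed
  have ne: "ps \<noteq> []" using sr len by auto
  have "last ps = ps ! (r - s - 1)" using ne len by (simp add: last_conv_nth)
  hence lst: "atgt (last ps) = w ! r" using nth[of "r - s - 1"] sr by (simp add: atgt_def)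
  have "w ! r < length T" using W1' r unfolding w_def by simp
  from pc_TM[OF ne P1 P2 lst this] show ?thesis unfolding ps_def by simp
qed

lemma zero_inverse:
  assumes r: "r < length (ws q)" and sr: "s < r" and all: "\<And>k. s \<le> k \<Longrightarrow> k < r \<Longrightarrow> \<not> snd (lt q k)"
  shows "pc n T (rev (map fst (map (lt q) [s..<r]))) \<noteq> None"
proof -
  define w where "w = ws q"
  have enr: "\<And>k. s \<le> k \<Longrightarrow> k < r \<Longrightarrow> en (w ! k) \<noteq> en (w ! Suc k)" using all lt_arr(2) unfolding w_def by blast
  have lor: "\<And>k. s \<le> k \<Longrightarrow> k < r \<Longrightarrow> lo (w ! k) = lo (w ! Suc k)"
  proof -
    fix k assume k: "s \<le> k" "k < r"
    hence "Suc k < length (ws q)" using r by simp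
    from share[OF this] enr[OF k] show "lo (w ! k) = lo (w ! Suc k)" unfolding w_def by blast
  qed
  have loe: "\<And>k. s \<le> k \<Longrightarrow> k \<le> r \<Longrightarrow> lo (w ! s) = lo (w ! k)"
  proof -
    fix k assume "s \<le> k" "k \<le> r"
    have "lo (w ! s) = lo (w ! k)"
      using eq_run[of s k "\<lambda>k. lo (w ! k)" s] lor \<open>k \<le> r\<close> \<open>s \<le> k\<close> by simp
    thus "lo (w ! s) = lo (w ! k)" .
  qed
  have fa: "\<And>k. s \<le> k \<Longrightarrow> k < r \<Longrightarrow> fst (lt q k) = (w ! Suc k, w ! k, (TM, en (w ! k) - lo (w ! Suc k)))"
    using enr lt_arr(1) unfolding w_def by simp
  define ps where "ps = map fst (map (lt q) [s..<r])"
  have len: "length ps = r - s" unfolding ps_def by simp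
  have nth: "\<And>k. k < r - s \<Longrightarrow> ps ! k = (w ! Suc (s + k), w ! (s + k), (TM, en (w ! (s + k)) - lo (w ! Suc (s + k))))"
    unfolding ps_def using fa by simp
  have P1: "P1 (rev ps)" by (rule P1_rev) (simp add: len nth asrc_def atgt_def)
  have P2: "P2 (w ! s) (rev ps)"
    unfolding P2_def set_rev
  proof
    fix \<alpha> assume "\<alpha> \<in> set ps"
    then obtain k where k: "s \<le> k" "k < r" "\<alpha> = fst (lt q k)" unfolding ps_def by auto
    have a: "\<alpha> = (w ! Suc k, w ! k, (TM, en (w ! k) - lo (w ! Suc k)))" using fa k by simp
    have "lo (w ! Suc k) \<le> lo (w ! s) \<and> en (w ! s) \<le> en (w ! Suc k)" using W3[of s "Suc k" q] k r unfolding w_def by simp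
    moreover have "lo (w ! s) < en (w ! s)" using wi[OF W1'[of s q]] k r unfolding w_def by simp
    moreover have "lo (w ! s) = lo (w ! Suc k)" using loe[of "Suc k"] k by simp
    moreover have "w ! k < length T" "w ! Suc k < length T" using W1' k r unfolding w_def by auto
    ultimately show "asrc \<alpha> < length T \<and> atgt \<alpha> < length T \<and>
      snd (snd \<alpha>) = (TM, en (atgt \<alpha>) - lo (asrc \<alpha>)) \<and>
      lo (w ! s) \<le> lo (asrc \<alpha>) \<and> lo (asrc \<alpha>) < en (w ! s) \<and> en (w ! s) \<le> en (asrc \<alpha>)"
      using a by (simp add: asrc_def atgt_def)
  qed
  have ne: "rev ps \<noteq> []" using sr len by auto
  have "last (rev ps) = ps ! 0" using ne by (simp add: last_rev hd_conv_nth)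
  hence lst: "atgt (last (rev ps)) = w ! s" using nth[of 0] sr by (simp add: atgt_def)
  have "w ! s < length T" using W1' r sr unfolding w_def by simp
  from pc_TM[OF ne P1 P2 lst this] show ?thesis unfolding ps_def by simp
qed

end


context mr
begin

lemma Pq_csig:
  assumes ne: "Ch q \<noteq> {}"
  shows "Pq q (csig q)"
proof -
  define w where "w = ws q"
  define m where "m = length w"
  have m1: "1 \<le> m" using ne ws[of q] unfolding m_def w_def by (cases "ws q") auto
  have sv: "svtx (csig q) = w" using svtx_csig[OF ne] unfolding w_def .
  define L where "L = map (lt q) [0..<m - 1]"
  have cs: "csig q = (w ! 0, L)" unfolding csig_def L_def w_def m_def by simp
  have lenL: "length L = m - 1" unfolding L_def by simp
  have Li: "\<And>s. s < m - 1 \<Longrightarrow> L ! s = lt q s" unfolding L_def by simp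
  have iss: "is_string n T (csig q)"
    unfolding is_string_def Let_def cs fst_conv snd_conv
  proof (intro conjI allI impI ballI)
    have "0 < length (ws q)" using m1 unfolding m_def w_def by linarith
    thus "w ! 0 < length T" using W1'[of 0 q] unfolding w_def by simp
  next
    fix l assume "l \<in> set L"
    then obtain k where "k < m - 1" "l = lt q k" unfolding L_def by auto
    thus "fst l \<in> Arr n T" using L1[of k q] unfolding m_def w_def by simp
  next
    assume "L \<noteq> []"
    hence "0 < m - 1" using lenL by (cases L) auto
    thus "lsrc (L ! 0) = w ! 0" using Li[of 0] lt_src_tgt unfolding w_def by simp
  next
    fix s assume s: "Suc s < length L"
    show "ltgt (L ! s) = lsrc (L ! Suc s)" using s Li lenL lt_src_tgt by simp
    have d: "w ! s \<noteq> w ! Suc s" "w ! s \<noteq> w ! Suc (Suc s)" "w ! Suc s \<noteq> w ! Suc (Suc s)"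
      using s lenL Wdist[of _ q] unfolding w_def m_def by auto
    show "\<not> (fst (L ! Suc s) = fst (L ! s) \<and> snd (L ! Suc s) \<noteq> snd (L ! s))"
      using s lenL Li[of s] Li[of "Suc s"] d lt_arr(1)[of q s] lt_arr(1)[of q "Suc s"] unfolding w_def
      by (auto split: if_splits)
  next
    fix s r assume sr: "s + 2 \<le> r \<and> r \<le> length L" and al: "\<forall>l\<in>set (seg L s r). snd l"
    have sg: "seg L s r = map (lt q) [s..<r]" unfolding L_def using sr lenL by (simp add: seg_map)
    have r: "r < length (ws q)" "s < r" using sr lenL m1 unfolding m_def w_def by auto
    show "pc n T (map fst (seg L s r)) \<noteq> None"
      using al unfolding sg using zero_direct[OF r] by auto
  next
    fix s r assume sr: "s + 2 \<le> r \<and> r \<le> length L" and al: "\<forall>l\<in>set (seg L s r). \<not> snd l"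
    have sg: "seg L s r = map (lt q) [s..<r]" unfolding L_def using sr lenL by (simp add: seg_map)
    have r: "r < length (ws q)" "s < r" using sr lenL m1 unfolding m_def w_def by auto
    show "pc n T (rev (map fst (seg L s r))) \<noteq> None"
      using al unfolding sg using zero_inverse[OF r] by auto
  qed
  have last: "\<forall>i\<in>Ch q. snd (T ! i) \<le> snd (T ! last (svtx (csig q)))"
  proof
    fix i assume "i \<in> Ch q"
    then obtain t where t: "t < m" "w ! t = i" using W4 unfolding w_def m_def by blast
    have lw: "last w = w ! (m - 1)" using m1 unfolding m_def by (cases w) (auto simp: last_conv_nth)
    have mm: "m - 1 < length (ws q)" "t < length (ws q)" using t m1 unfolding m_def w_def by auto
    have "en (ws q ! t) - lo (ws q ! t) \<le> en (ws q ! (m - 1)) - lo (ws q ! (m - 1))"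
    proof (cases "t = m - 1")
      case True thus ?thesis by simp
    next
      case False hence "t < m - 1" using t by simp
      thus ?thesis using W2[OF _ mm(1), of t] by simp
    qed
    hence "en (w ! t) - lo (w ! t) \<le> en (w ! (m - 1)) - lo (w ! (m - 1))" unfolding w_def .
    thus "snd (T ! i) \<le> snd (T ! last (svtx (csig q)))"
      using t wi[OF W1'[of t q]] wi[OF W1'[of "m - 1" q]] m1 sv lw unfolding w_def m_def by simp
  qed
  show ?thesis unfolding Pq_def using iss last sv ws[of q] unfolding w_def by simp
qed

lemma adj:
  assumes A: "(i, j, (TM, s')) \<in> Arr n T" and t: "ti < length (ws q)" "tj < length (ws q)"
    and e: "ws q ! ti = i" "ws q ! tj = j"
  shows "(tj = Suc ti \<and> en i = en j) \<or> (ti = Suc tj \<and> lo i = lo j \<and> en i \<noteq> en j)"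
proof -
  have a: "i < length T" "j < length T" "i \<noteq> j" "lo j \<le> lo i" "lo i < en j" "en j \<le> en i"
    and nok: "\<not> (\<exists>k < length T. k \<noteq> i \<and> k \<noteq> j \<and> lo j \<le> lo k \<and> lo k \<le> lo i \<and> en j \<le> en k \<and> en k \<le> en i)"
    using A unfolding ArrTM by auto
  have ne: "ti \<noteq> tj" using a(3) e by auto
  show ?thesis
  proof (cases "ti < tj")
    case True
    have "lo j \<le> lo i \<and> en i \<le> en j" using W3[of ti tj q] True t e by simp
    hence ee: "en i = en j" using a by simp
    have "tj = Suc ti"
    proof (rule ccontr)
      assume "tj \<noteq> Suc ti"
      hence st: "Suc ti < tj" using True by simp
      define k where "k = ws q ! Suc ti"
      have "lo (ws q ! tj) \<le> lo k \<and> en k \<le> en (ws q ! tj)" using W3[of "Suc ti" tj q] st t unfolding k_def by simp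
      moreover have "lo k \<le> lo (ws q ! ti) \<and> en (ws q ! ti) \<le> en k" using W3[of ti "Suc ti" q] st t unfolding k_def by simp
      moreover have "k \<noteq> i" "k \<noteq> j" using Wdist[of "Suc ti" q ti] Wdist[of "Suc ti" q tj] st t e unfolding k_def by auto
      moreover have "k < length T" using W1' st t unfolding k_def by simp
      ultimately show False using nok e ee by auto
    qed
    thus ?thesis using ee by simp
  next
    case False
    hence lt: "tj < ti" using ne by simp
    have "lo i \<le> lo j \<and> en j \<le> en i" using W3[of tj ti q] lt t e by simp
    hence ll: "lo i = lo j" using a by simp
    have en: "en i \<noteq> en j" using eqi[OF a(1,2) ll] a(3) by auto
    have "ti = Suc tj"
    proof (rule ccontr)
      assume "ti \<noteq> Suc tj"
      hence st: "Suc tj < ti" using lt by simp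
      define k where "k = ws q ! Suc tj"
      have "lo (ws q ! ti) \<le> lo k \<and> en k \<le> en (ws q ! ti)" using W3[of "Suc tj" ti q] st t unfolding k_def by simp
      moreover have "lo k \<le> lo (ws q ! tj) \<and> en (ws q ! tj) \<le> en k" using W3[of tj "Suc tj" q] st t unfolding k_def by simp
      moreover have "k \<noteq> i" "k \<noteq> j" using Wdist[of "Suc tj" q ti] Wdist[of "Suc tj" q tj] st t e unfolding k_def by auto
      moreover have "k < length T" using W1' st t unfolding k_def by simp
      ultimately show False using nok e ll by auto
    qed
    thus ?thesis using ll en by simp
  qed
qed

lemma letter_eq:
  assumes A: "(i, j, (TM, s')) \<in> Arr n T" and t: "ti < length (ws q)" "tj < length (ws q)"
    and e: "ws q ! ti = i" "ws q ! tj = j"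
  shows "(tj = Suc ti \<and> lt q ti = ((i, j, (TM, s')), True)) \<or> (ti = Suc tj \<and> lt q tj = ((i, j, (TM, s')), False))"
proof -
  have s: "s' = en j - lo i" using A unfolding ArrTM by simp
  from adj[OF A t e] show ?thesis
  proof
    assume "tj = Suc ti \<and> en i = en j"
    thus ?thesis using e s unfolding lt_def Let_def by simp
  next
    assume h: "ti = Suc tj \<and> lo i = lo j \<and> en i \<noteq> en j"
    thus ?thesis using e s unfolding lt_def Let_def by auto
  qed
qed

lemma Pq_unique:
  assumes P: "Pq q \<sigma>"
  shows "\<sigma> = csig q"
proof -
  obtain v0 L where sg: "\<sigma> = (v0, L)" by (cases \<sigma>)
  define v where "v = svtx \<sigma>"
  define w where "w = ws q"
  define m where "m = length w"
  have iss: "is_string n T \<sigma>" and dv: "distinct v" and sv: "set v = Ch q"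
    and lst: "\<forall>i\<in>Ch q. snd (T ! i) \<le> snd (T ! last v)" using P unfolding Pq_def v_def by auto
  have hA: "\<forall>l\<in>set L. fst l \<in> Arr n T" and h0: "L \<noteq> [] \<longrightarrow> lsrc (L ! 0) = v0"
    and hc: "\<forall>s. Suc s < length L \<longrightarrow> ltgt (L ! s) = lsrc (L ! Suc s)"
    using iss unfolding is_string_def Let_def sg by auto
  have vdef: "v = v0 # map ltgt L" unfolding v_def sg svtx_def by simp
  have lv: "length v = m"
    using distinct_card[OF dv] distinct_card[of w] ws[of q] sv unfolding w_def m_def by simp
  have lenL: "length L = m - 1" using lv vdef by simp
  have m1: "1 \<le> m" using lv vdef by simp
  have src: "\<And>s. s < length L \<Longrightarrow> lsrc (L ! s) = v ! s \<and> ltgt (L ! s) = v ! Suc s"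
  proof -
    fix s assume s: "s < length L"
    have "lsrc (L ! s) = v ! s"
    proof (cases s)
      case 0 thus ?thesis using h0 s vdef by auto
    next
      case (Suc s') thus ?thesis using hc s vdef by auto
    qed
    thus "lsrc (L ! s) = v ! s \<and> ltgt (L ! s) = v ! Suc s" using vdef s by simp
  qed
  have vC: "\<And>r. r < m \<Longrightarrow> v ! r \<in> Ch q" using sv lv by auto
  have vd: "\<And>r r'. r < m \<Longrightarrow> r' < m \<Longrightarrow> v ! r = v ! r' \<longleftrightarrow> r = r'" using dv lv nth_eq_iff_index_eq by auto
  have arr: "\<And>s. s < length L \<Longrightarrow> \<exists>i j s'. fst (L ! s) = (i, j, (TM, s')) \<and> (i, j, (TM, s')) \<in> Arr n T \<and>
      (if snd (L ! s) then i = v ! s \<and> j = v ! Suc s else i = v ! Suc s \<and> j = v ! s)"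
  proof -
    fix s assume s: "s < length L"
    obtain i j \<mu> where a: "fst (L ! s) = (i, j, \<mu>)" by (cases "fst (L ! s)") auto
    have ai: "(i, j, \<mu>) \<in> Arr n T" using hA s a by (metis nth_mem)
    have ep: "if snd (L ! s) then i = v ! s \<and> j = v ! Suc s else i = v ! Suc s \<and> j = v ! s"
      using src[OF s] a unfolding lsrc_def ltgt_def asrc_def atgt_def by (auto split: if_splits)
    have sm: "Suc s < m" using s lenL by simp
    have vv: "v ! s \<in> Ch q" "v ! Suc s \<in> Ch q" "v ! s \<noteq> v ! Suc s" using vC[of s] vC[of "Suc s"] vd[of s "Suc s"] sm by auto
    have ij: "i \<in> Ch q" "j \<in> Ch q" "i \<noteq> j" using ep vv
      by (auto split: if_splits)
    obtain tg s' where mu: "\<mu> = (tg, s')" by (cases \<mu>)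
    have "tg = TM"
    proof (cases tg)
      case DM
      thus ?thesis using ArrDM[of i j s'] ai mu ij nest[OF ij(1,2)] by auto
    qed simp
    thus "\<exists>i j s'. fst (L ! s) = (i, j, (TM, s')) \<and> (i, j, (TM, s')) \<in> Arr n T \<and>
      (if snd (L ! s) then i = v ! s \<and> j = v ! Suc s else i = v ! Suc s \<and> j = v ! s)"
      using a ai ep mu by blast
  qed
  have step: "\<And>r t. Suc r < m \<Longrightarrow> t < m \<Longrightarrow> w ! t = v ! r \<Longrightarrow> v ! Suc r = w ! Suc r \<Longrightarrow> t = r \<or> t = Suc (Suc r)"
  proof -
    fix r t assume r: "Suc r < m" and t: "t < m" "w ! t = v ! r" "v ! Suc r = w ! Suc r"
    obtain i j s' where a: "fst (L ! r) = (i, j, (TM, s'))" "(i, j, (TM, s')) \<in> Arr n T"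
      "if snd (L ! r) then i = v ! r \<and> j = v ! Suc r else i = v ! Suc r \<and> j = v ! r"
    proof -
      have "r < length L" using r lenL by simp
      from arr[OF this] show ?thesis using that by blast
    qed
    show "t = r \<or> t = Suc (Suc r)"
    proof (cases "snd (L ! r)")
      case True
      hence "i = w ! t" "j = w ! Suc r" using a(3) t by auto
      from adj[OF a(2), of t q "Suc r"] this t r show ?thesis unfolding w_def m_def by auto
    next
      case False
      hence "j = w ! t" "i = w ! Suc r" using a(3) t by auto
      from adj[OF a(2), of "Suc r" q t] this t r show ?thesis unfolding w_def m_def by auto
    qed
  qed
  have vw: "\<And>d. d < m \<Longrightarrow> v ! (m - 1 - d) = w ! (m - 1 - d)"
  proof -
    fix d show "d < m \<Longrightarrow> v ! (m - 1 - d) = w ! (m - 1 - d)"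
    proof (induction d rule: less_induct)
      case (less d)
      have md: "m - 1 - d < m" using m1 by linarith
      obtain t where t: "t < m" "w ! t = v ! (m - 1 - d)" using W4[OF vC[OF md]]
        unfolding w_def m_def by blast
      show ?case
      proof (cases d)
        case 0
        have lw: "last v = v ! (m - 1)" using lv m1 by (cases v) (auto simp: last_conv_nth)
        have "snd (T ! (w ! (m - 1))) \<le> snd (T ! (v ! (m - 1)))"
          using lst W1[of "m - 1" q] m1 lw unfolding w_def m_def by simp
        hence "en (w ! (m - 1)) - lo (w ! (m - 1)) \<le> en (w ! t) - lo (w ! t)"
          using wi[OF W1'[of "m - 1" q]] wi[OF W1'[of t q]] m1 t 0 unfolding w_def m_def by simp
        hence "m - 1 \<le> t" using Wlen[of "m - 1" q t] m1 t unfolding w_def m_def by simp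
        hence "t = m - 1" using t by simp
        thus ?thesis using t 0 by simp
      next
        case (Suc d')
        define r where "r = m - 1 - d"
        have r: "Suc r < m" "m - 1 - d' = Suc r" using less.prems Suc unfolding r_def by auto
        have nx: "v ! Suc r = w ! Suc r" using less.IH[of d'] Suc less.prems r by simp
        have "t = r \<or> t = Suc (Suc r)" using step[OF r(1) t(1) _ nx] t(2) unfolding r_def by simp
        moreover have "t \<noteq> Suc (Suc r)"
        proof
          assume tt: "t = Suc (Suc r)"
          obtain d'' where d'': "d' = Suc d''" using tt t(1) r Suc less.prems unfolding r_def
            by (cases d') auto
          have e2: "m - 1 - d'' = Suc (Suc r)" using d'' Suc less.prems unfolding r_def by auto
          have "v ! (m - 1 - d'') = w ! (m - 1 - d'')" using less.IH[of d''] Suc d'' less.prems by auto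
          hence "v ! Suc (Suc r) = w ! Suc (Suc r)" using e2 by simp
          hence "v ! r = v ! Suc (Suc r)" using t(2) tt unfolding r_def by simp
          thus False using vd[of r "Suc (Suc r)"] tt t(1) r by simp
        qed
        ultimately show ?thesis using t unfolding r_def by simp
      qed
    qed
  qed
  have vw': "v = w"
  proof (rule nth_equalityI)
    show "length v = length w" using lv unfolding m_def by simp
    fix r assume "r < length v"
    hence "m - 1 - (m - 1 - r) = r" "m - 1 - r < m" using lv by auto
    thus "v ! r = w ! r" using vw[of "m - 1 - r"] by simp
  qed
  have Leq: "L = map (lt q) [0..<m - 1]"
  proof (rule nth_equalityI)
    show "length L = length (map (lt q) [0..<m - 1])" using lenL by simp
    fix s assume s: "s < length L"
    obtain i j s' where a: "fst (L ! s) = (i, j, (TM, s'))" "(i, j, (TM, s')) \<in> Arr n T"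
      "if snd (L ! s) then i = v ! s \<and> j = v ! Suc s else i = v ! Suc s \<and> j = v ! s"
      using arr[OF s] by auto
    have sm: "Suc s < m" using s lenL by simp
    have "L ! s = lt q s"
    proof (cases "snd (L ! s)")
      case True
      hence e: "w ! s = i" "w ! Suc s = j" using a(3) vw' by auto
      have "lt q s = ((i, j, (TM, s')), True)" using letter_eq[OF a(2), of s q "Suc s"] e sm unfolding w_def m_def by auto
      thus ?thesis using a(1) True by (metis prod.collapse)
    next
      case False
      hence e: "w ! Suc s = i" "w ! s = j" using a(3) vw' by auto
      have "lt q s = ((i, j, (TM, s')), False)" using letter_eq[OF a(2), of "Suc s" q s] e sm unfolding w_def m_def by auto
      thus ?thesis using a(1) False by (metis prod.collapse)
    qed
    thus "L ! s = map (lt q) [0..<m - 1] ! s" using s lenL by simp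
  qed
  have "v0 = w ! 0" using vw' vdef by auto
  thus ?thesis using Leq sg unfolding csig_def w_def m_def by simp
qed

lemma the_csig: "Ch q \<noteq> {} \<Longrightarrow> (THE \<sigma>. Pq q \<sigma>) = csig q"
  using Pq_csig Pq_unique by (intro the_equality) auto

lemma str_act:
  assumes A: "\<alpha> \<in> Arr n T" and t: "ti < length (ws q)" "tj < length (ws q)"
    and e: "ws q ! ti = asrc \<alpha>" "ws q ! tj = atgt \<alpha>"
  shows "((tj = Suc ti \<and> Suc ti < length (ws q) \<and> lt q ti = (\<alpha>, True)) \<or>
          (ti = Suc tj \<and> Suc tj < length (ws q) \<and> lt q tj = (\<alpha>, False))) \<longleftrightarrow> fst (snd (snd \<alpha>)) = TM"
proof
  assume "(tj = Suc ti \<and> Suc ti < length (ws q) \<and> lt q ti = (\<alpha>, True)) \<or>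
          (ti = Suc tj \<and> Suc tj < length (ws q) \<and> lt q tj = (\<alpha>, False))"
  then obtain k d where "lt q k = (\<alpha>, d)" by blast
  hence "\<alpha> = fst (lt q k)" by simp
  thus "fst (snd (snd \<alpha>)) = TM" using lt_arr(1)[of q k] by (auto split: if_splits)
next
  assume tm: "fst (snd (snd \<alpha>)) = TM"
  obtain i j s' where a: "\<alpha> = (i, j, (TM, s'))" using tm by (cases \<alpha>) (auto simp: prod_eq_iff)
  have e': "ws q ! ti = i" "ws q ! tj = j" using e a by (auto simp: asrc_def atgt_def)
  from letter_eq[OF A[unfolded a] t e'] show "(tj = Suc ti \<and> Suc ti < length (ws q) \<and> lt q ti = (\<alpha>, True)) \<or>
          (ti = Suc tj \<and> Suc tj < length (ws q) \<and> lt q tj = (\<alpha>, False))" using a t by auto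
qed

end


context mr
begin

lemma HBX:
  assumes a: "1 \<le> a" "a \<le> n" and b: "n \<le> b" and v: "v < length T"
  shows "HB n (T ! v) (a, b) = (if v \<in> Ch a then {(TM, en v - a)} else {}) \<union>
      (if v \<in> Ch (md n (a + b + 1)) then {(DM, md n (a + b + 1) + 1 - lo v)} else {})"
proof (rule set_eqI)
  fix x :: bas
  obtain tg m where x: "x = (tg, m)" by (cases x)
  show "x \<in> HB n (T ! v) (a, b) \<longleftrightarrow> x \<in> (if v \<in> Ch a then {(TM, en v - a)} else {}) \<union>
      (if v \<in> Ch (md n (a + b + 1)) then {(DM, md n (a + b + 1) + 1 - lo v)} else {})"
  proof (cases tg)
    case TM
    thus ?thesis using TM_X[OF n2 wingi[OF v] a b, of m] v unfolding x Ch_def lo_def en_def by auto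
  next
    case DM
    thus ?thesis using DM_X[OF n2 wingi[OF v] a b, of m] v unfolding x Ch_def lo_def en_def by auto
  qed
qed

lemma hom_act:
  assumes a: "1 \<le> a" "a \<le> n" and b: "n \<le> b" and ab: "2 * n \<le> a + b"
    and ij: "i < length T" "j < length T" and mu: "\<mu> \<in> HB n (T ! j) (T ! i)" and y: "y \<in> HB n (T ! i) (a, b)"
  shows "bcomp n (T ! j) (T ! i) (a, b) y \<mu> =
    (if fst \<mu> = TM then
       (if fst y = TM then (if j \<in> Ch a then Some (TM, en j - a) else None)
        else (if j \<in> Ch (md n (a + b + 1)) then Some (DM, md n (a + b + 1) + 1 - lo j) else None))
     else None)"
proof -
  define p where "p = md n (a + b + 1)"
  have HBi: "HB n (T ! i) (a, b) = (if i \<in> Ch a then {(TM, en i - a)} else {}) \<union>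
      (if i \<in> Ch p then {(DM, p + 1 - lo i)} else {})" using HBX[OF a b ij(1)] unfolding p_def .
  have HBj: "HB n (T ! j) (a, b) = (if j \<in> Ch a then {(TM, en j - a)} else {}) \<union>
      (if j \<in> Ch p then {(DM, p + 1 - lo j)} else {})" using HBX[OF a b ij(2)] unfolding p_def .
  have wi': "snd (T ! i) = en i - lo i" "snd (T ! j) = en j - lo j" "en i \<le> n" "en j \<le> n" "lo j < en j" "1 \<le> lo j"
    using wi[OF ij(1)] wi[OF ij(2)] by auto
  obtain tm s where m: "\<mu> = (tm, s)" by (cases \<mu>)
  obtain ty t where yy: "y = (ty, t)" by (cases y)
  show ?thesis
  proof (cases tm)
    case TM
    hence s: "lo j \<le> lo i \<and> lo i < en j \<and> en j \<le> en i \<and> s = en j - lo i" using mu m TMi[OF ij] by simp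
    show ?thesis
    proof (cases ty)
      case TM
      hence t: "i \<in> Ch a" "t = en i - a" using y yy HBi by (auto split: if_splits)
      have "en j - lo i + (en i - a) - snd (T ! i) = en j - a" using wi' by simp
      thus ?thesis using TM \<open>tm = TM\<close> m yy s t HBj unfolding p_def[symmetric] by (auto simp: Let_def)
    next
      case DM
      hence t: "i \<in> Ch p" "t = p + 1 - lo i" using y yy HBi by (auto split: if_splits)
      have "p + 1 - lo i + snd (T ! j) - (en j - lo i) = p + 1 - lo j" using wi' by simp
      thus ?thesis using DM \<open>tm = TM\<close> m yy s t HBj unfolding p_def[symmetric] by (auto simp: Let_def)
    qed
  next
    case DM
    have s1: "1 \<le> s" using mu m DM by (auto simp: HB_DM BT_mem)
    show ?thesis
    proof (cases ty)
      case TM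
      hence t: "i \<in> Ch a" "t = en i - a" using y yy HBi by (auto split: if_splits)
      have "(DM, s + b - t) \<notin> HB n (T ! j) (a, b)"
      proof
        assume "(DM, s + b - t) \<in> HB n (T ! j) (a, b)"
        hence "s + b - t = p + 1 - lo j" "j \<in> Ch p" using HBj by (auto split: if_splits)
        thus False using s1 t wi' ab unfolding Ch_def by auto
      qed
      thus ?thesis using DM TM m yy by (simp add: Let_def)
    next
      case DM
      thus ?thesis using \<open>tm = DM\<close> m yy by simp
    qed
  qed
qed

definition pos :: "int \<Rightarrow> nat \<Rightarrow> nat" where
  "pos q v = (THE s. s < length (ws q) \<and> ws q ! s = v)"

lemma pos: "v \<in> Ch q \<Longrightarrow> pos q v < length (ws q) \<and> ws q ! pos q v = v"
proof -
  assume "v \<in> Ch q"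
  then obtain t where t: "t < length (ws q)" "ws q ! t = v" using W4 by blast
  have "\<exists>!s. s < length (ws q) \<and> ws q ! s = v" using t Wdist[of _ q] by (intro ex1I[of _ t]) auto
  thus ?thesis unfolding pos_def by (rule theI')
qed

definition strB :: "int \<Rightarrow> nat \<Rightarrow> nat set" where
  "strB q v = {s. s < length (ws q) \<and> ws q ! s = v}"

definition strA :: "int \<Rightarrow> arrow \<Rightarrow> nat \<Rightarrow> nat \<Rightarrow> 'k::field" where
  "strA q \<alpha> s' s = (if (s' = Suc s \<and> Suc s < length (ws q) \<and> lt q s = (\<alpha>, True)) \<or>
       (s = Suc s' \<and> Suc s' < length (ws q) \<and> lt q s' = (\<alpha>, False)) then 1 else 0)"

lemma strB_eq: "strB q v = (if v \<in> Ch q then {pos q v} else {})"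
proof (cases "v \<in> Ch q")
  case True
  have "\<And>s. s < length (ws q) \<Longrightarrow> ws q ! s = v \<Longrightarrow> s = pos q v"
    using pos[OF True] Wdist[of _ q] by metis
  thus ?thesis using True pos[OF True] unfolding strB_def by auto
next
  case False
  thus ?thesis unfolding strB_def using W1 by auto
qed

lemma strA_val:
  assumes "\<alpha> \<in> Arr n T" "asrc \<alpha> \<in> Ch q" "atgt \<alpha> \<in> Ch q"
  shows "strA q \<alpha> (pos q (atgt \<alpha>)) (pos q (asrc \<alpha>)) = (if fst (snd (snd \<alpha>)) = TM then 1 else 0)"
  using str_act[OF assms(1), of "pos q (asrc \<alpha>)" q "pos q (atgt \<alpha>)"] pos[OF assms(2)] pos[OF assms(3)]
  unfolding strA_def by simp

lemma sm_eq:
  assumes "RV n T X t = Ch q"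
  shows "(string_mod (sigma n T X t) :: (nat, 'k::field) qrep) = (strB q, strA q)"
proof (cases "Ch q = {}")
  case True
  hence w0: "ws q = []" using ws[of q] by simp
  have "sigma n T X t = None" using assms True unfolding sigma_def by simp
  thus ?thesis using w0 unfolding string_mod_def strB_def strA_def by (auto intro!: ext)
next
  case False
  have "(THE \<sigma>. is_string n T \<sigma> \<and> distinct (svtx \<sigma>) \<and> set (svtx \<sigma>) = RV n T X t \<and>
        (\<forall>i\<in>RV n T X t. snd (T ! i) \<le> snd (T ! last (svtx \<sigma>)))) = csig q"
    using the_csig[OF False] unfolding assms Pq_def .
  hence sg: "sigma n T X t = Some (csig q)" using assms False unfolding sigma_def by simp
  have m1: "1 \<le> length (ws q)" using False ws[of q] by (cases "ws q") auto
  have sv: "svtx (csig q) = ws q" using svtx_csig[OF False] .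
  have sn: "snd (csig q) = map (lt q) [0..<length (ws q) - 1]" unfolding csig_def by simp
  show ?thesis
    unfolding sg string_mod_def option.case sv sn
  proof (intro prod_eqI ext)
    fix v
    show "fst (\<lambda>v. {s. s \<le> length (map (lt q) [0..<length (ws q) - 1]) \<and> ws q ! s = v},
        \<lambda>\<alpha> s' s. if s' = Suc s \<and> s < length (map (lt q) [0..<length (ws q) - 1]) \<and> map (lt q) [0..<length (ws q) - 1] ! s = (\<alpha>, True) \<or>
            s = Suc s' \<and> s' < length (map (lt q) [0..<length (ws q) - 1]) \<and> map (lt q) [0..<length (ws q) - 1] ! s' = (\<alpha>, False)
          then 1 else (0::'k)) v = fst (strB q, strA q :: arrow \<Rightarrow> nat \<Rightarrow> nat \<Rightarrow> 'k) v"
      using m1 unfolding strB_def by auto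
  next
    fix \<alpha> s' s
    show "snd (\<lambda>v. {s. s \<le> length (map (lt q) [0..<length (ws q) - 1]) \<and> ws q ! s = v},
        \<lambda>\<alpha> s' s. if s' = Suc s \<and> s < length (map (lt q) [0..<length (ws q) - 1]) \<and> map (lt q) [0..<length (ws q) - 1] ! s = (\<alpha>, True) \<or>
            s = Suc s' \<and> s' < length (map (lt q) [0..<length (ws q) - 1]) \<and> map (lt q) [0..<length (ws q) - 1] ! s' = (\<alpha>, False)
          then 1 else (0::'k)) \<alpha> s' s = snd (strB q, strA q :: arrow \<Rightarrow> nat \<Rightarrow> nat \<Rightarrow> 'k) \<alpha> s' s"
      unfolding strA_def by auto
  qed
qed

end


locale mrX = mr +
  fixes a b :: int
  assumes a1: "1 \<le> a" and a2: "a \<le> n" and bn: "n \<le> b" and ab: "2 * n \<le> a + b"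
begin

abbreviation "pp \<equiv> md n (a + b + 1)"

abbreviation B1 :: "nat \<Rightarrow> bas set" where
  "B1 \<equiv> \<lambda>i. if i < length T then HB n (T ! i) (a, b) else {}"

abbreviation B2 :: "nat \<Rightarrow> (nat + nat) set" where
  "B2 \<equiv> \<lambda>v. Inl ` strB a v \<union> Inr ` strB pp v"

definition Pw :: "nat \<Rightarrow> nat + nat \<Rightarrow> bas \<Rightarrow> 'k::field" where
  "Pw v x y = (case x of Inl _ \<Rightarrow> if fst y = TM then 1 else 0 | Inr _ \<Rightarrow> if fst y = DM then 1 else 0)"

lemma B1_eq: "v < length T \<Longrightarrow> B1 v = (if v \<in> Ch a then {(TM, en v - a)} else {}) \<union>
      (if v \<in> Ch pp then {(DM, pp + 1 - lo v)} else {})"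
  using HBX[OF a1 a2 bn] by simp

lemma B2_eq: "B2 v = (if v \<in> Ch a then {Inl (pos a v)} else {}) \<union> (if v \<in> Ch pp then {Inr (pos pp v)} else {})"
  unfolding strB_eq by auto

lemma sumA:
  assumes v: "v < length T" and x: "x \<in> B1 v" and y: "y \<in> B1 v"
  shows "(\<Sum>z\<in>B2 v. Pw v z x * Pw v z y) = (if x = y then 1 else (0::'k::field))"
  using x y unfolding B2_eq B1_eq[OF v] by (cases "v \<in> Ch a"; cases "v \<in> Ch pp") (auto simp: Pw_def)

lemma sumB:
  assumes v: "v < length T" and x: "x \<in> B2 v" and y: "y \<in> B2 v"
  shows "(\<Sum>z\<in>B1 v. Pw v x z * Pw v y z) = (if x = y then 1 else (0::'k::field))"
  using x y unfolding B2_eq B1_eq[OF v] by (cases "v \<in> Ch a"; cases "v \<in> Ch pp") (auto simp: Pw_def)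

lemma inter:
  assumes A: "\<alpha> \<in> Arr n T" and x: "x \<in> B2 (atgt \<alpha>)" and y: "y \<in> B1 (asrc \<alpha>)"
  shows "(\<Sum>z\<in>B1 (atgt \<alpha>). Pw (atgt \<alpha>) x z *
            (if bcomp n (T ! atgt \<alpha>) (T ! asrc \<alpha>) (a, b) y (snd (snd \<alpha>)) = Some z then 1 else 0)) =
         (\<Sum>z\<in>B2 (asrc \<alpha>). (case (x, z) of (Inl s', Inl s) \<Rightarrow> strA a \<alpha> s' s
              | (Inr s', Inr s) \<Rightarrow> strA pp \<alpha> s' s | _ \<Rightarrow> 0) * Pw (asrc \<alpha>) z y :: 'k::field)"
proof -
  obtain i j \<mu> where al: "\<alpha> = (i, j, \<mu>)" by (cases \<alpha>)
  have ij: "i < length T" "j < length T" and mu: "\<mu> \<in> HB n (T ! j) (T ! i)"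
    using A unfolding al Arr_def radB_def by auto
  have src: "asrc \<alpha> = i" "atgt \<alpha> = j" "snd (snd \<alpha>) = \<mu>" unfolding al asrc_def atgt_def by auto
  have yi: "y \<in> HB n (T ! i) (a, b)" using y ij src by simp
  have act: "bcomp n (T ! j) (T ! i) (a, b) y \<mu> =
    (if fst \<mu> = TM then
       (if fst y = TM then (if j \<in> Ch a then Some (TM, en j - a) else None)
        else (if j \<in> Ch pp then Some (DM, pp + 1 - lo j) else None))
     else None)" by (rule hom_act[OF a1 a2 bn ab ij mu yi])
  have sa: "\<And>q. i \<in> Ch q \<Longrightarrow> j \<in> Ch q \<Longrightarrow> strA q \<alpha> (pos q j) (pos q i) = (if fst \<mu> = TM then 1 else (0::'k))"
  proof -
    fix q assume q: "i \<in> Ch q" "j \<in> Ch q"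
    have "strA q \<alpha> (pos q (atgt \<alpha>)) (pos q (asrc \<alpha>)) = (if fst (snd (snd \<alpha>)) = TM then 1 else (0::'k))"
      by (rule strA_val[OF A]) (use q src in auto)
    thus "strA q \<alpha> (pos q j) (pos q i) = (if fst \<mu> = TM then 1 else (0::'k))" using src by simp
  qed
  have xj: "x \<in> (if j \<in> Ch a then {Inl (pos a j)} else {}) \<union> (if j \<in> Ch pp then {Inr (pos pp j)} else {})"
    using x src B2_eq by simp
  have yi': "y \<in> (if i \<in> Ch a then {(TM, en i - a)} else {}) \<union> (if i \<in> Ch pp then {(DM, pp + 1 - lo i)} else {})"
    using yi B1_eq[OF ij(1)] ij by simp
  show ?thesis
    unfolding src B1_eq[OF ij(2)] B2_eq act
    using xj yi' sa[of a] sa[of pp]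
    by (cases "i \<in> Ch a"; cases "i \<in> Ch pp"; cases "j \<in> Ch a"; cases "j \<in> Ch pp"; cases "fst \<mu> = TM")
       (auto simp: Pw_def ij)
qed

end


context mrX
begin

lemma RV_TM: "RV n T (a, b) TM = Ch a"
  unfolding RV_def using HBX[OF a1 a2 bn] unfolding Ch_def by (auto split: if_splits)

lemma RV_DM: "RV n T (a, b) DM = Ch pp"
  unfolding RV_def using HBX[OF a1 a2 bn] unfolding Ch_def by (auto split: if_splits)

lemma main_iso:
  "rep_iso n T (hom_rep n T (a, b) :: (bas, 'k::field) qrep)
     (rep_sum (string_mod (sigma n T (a, b) TM)) (string_mod (sigma n T (a, b) DM)) :: (nat + nat, 'k) qrep)"
proof -
  have s1: "(string_mod (sigma n T (a, b) TM) :: (nat, 'k) qrep) = (strB a, strA a)" by (rule sm_eq[OF RV_TM])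
  have s2: "(string_mod (sigma n T (a, b) DM) :: (nat, 'k) qrep) = (strB pp, strA pp)" by (rule sm_eq[OF RV_DM])
  show ?thesis
    unfolding rep_iso_def Let_def hom_rep_def rep_sum_def s1 s2 fst_conv snd_conv
    apply (intro conjI)
     apply (auto simp: strB_def dest: W1')[1]
    apply (rule exI[of _ "Pw :: nat \<Rightarrow> nat + nat \<Rightarrow> bas \<Rightarrow> 'k"])
    apply (rule exI[of _ "\<lambda>v y x. Pw v x y :: 'k"])
    apply (intro conjI allI impI ballI)
    subgoal by (simp add: finite_HB)
    subgoal by (simp add: strB_def)
    subgoal for v x y using sumA[of v x y] by simp
    subgoal for v x y using sumB[of v x y] by simp
    subgoal for \<alpha> x y using inter[of \<alpha> x y] by simp
    done
qed

end

lemma arith_k: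
  fixes n b :: int
  assumes n: "n \<ge> 2" and b: "n \<le> b"
  shows "(n + b) mod n = n - 1 \<longleftrightarrow> (\<exists>k. k \<ge> 2 \<and> b = k * n - 1)"
proof
  assume h: "(n + b) mod n = n - 1"
  hence bm: "b mod n = n - 1" by simp
  have bd: "b = n * (b div n) + (n - 1)" using div_mult_mod_eq[of b n] bm by (simp add: algebra_simps)
  have "b div n \<ge> 1"
  proof (rule ccontr)
    assume "\<not> b div n \<ge> 1"
    hence "b div n \<le> 0" by simp
    hence "n * (b div n) \<le> 0" using n by (simp add: mult_nonneg_nonpos)
    thus False using bd b by linarith
  qed
  thus "\<exists>k. k \<ge> 2 \<and> b = k * n - 1" using bd by (intro exI[of _ "b div n + 1"]) (auto simp: algebra_simps)
next
  assume "\<exists>k. k \<ge> 2 \<and> b = k * n - 1"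
  then obtain k where k: "b = k * n - 1" by blast
  have e: "n + b = -1 + (k + 1) * n" using k by (simp add: algebra_simps)
  have "(n + b) mod n = (-1 + (k + 1) * n) mod n" by (simp only: e)
  also have "\<dots> = (-1) mod n" by (rule mod_mult_self1)
  also have "\<dots> = n - 1" using zmod_minus1[of n] n by simp
  finally show "(n + b) mod n = n - 1" .
qed

theorem theorem4p9:
  fixes n :: int and T :: "obj list" and X :: obj
  assumes alg_closed: "\<forall>p :: 'k::field poly. degree p \<ge> 1 \<longrightarrow> (\<exists>x. poly p x = 0)"
    and n2: "n \<ge> 2"
    and mr: "max_rigid n T" and basic: "distinct T"
    and top: "(1, n - 1) \<in> set T"
    and X: "indec n X" and notF: "X \<notin> Fset n"
  shows "(hom_zero n T X \<longleftrightarrow> (\<exists>k::int. k \<ge> 2 \<and> X = (n, k * n - 1))) \<and>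
         (\<not> (\<exists>k::int. k \<ge> 2 \<and> X = (n, k * n - 1)) \<longrightarrow>
            rep_iso n T (hom_rep n T X :: (bas, 'k) qrep)
              (rep_sum (string_mod (sigma n T X TM)) (string_mod (sigma n T X DM)) :: (nat + nat, 'k) qrep))"
proof -
  interpret mr n T by (rule mr_from[OF n2 mr basic top])
  obtain a b where Xab: "X = (a, b)" by (cases X)
  have a: "1 \<le> a" "a \<le> n" and b1: "1 \<le> b" using X unfolding Xab indec_def by auto
  have bn: "n \<le> b" and ab: "2 * n \<le> a + b" using notF a b1 unfolding Xab Fset_def by auto
  interpret mrX n T a b by unfold_locales (use a bn ab in auto)
  have iso: "rep_iso n T (hom_rep n T X :: (bas, 'k) qrep)
              (rep_sum (string_mod (sigma n T X TM)) (string_mod (sigma n T X DM)) :: (nat + nat, 'k) qrep)"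
    unfolding Xab by (rule main_iso)
  have n0: "0 < n" using n2 by simp
  have chE: "\<And>q. 1 \<le> q \<Longrightarrow> q \<le> n \<Longrightarrow> Ch q = {} \<longleftrightarrow> q = n"
  proof -
    fix q :: int assume q: "1 \<le> q" "q \<le> n"
    obtain t where t: "t < length T" "lo t = 1" "en t = n" using top_ex by blast
    show "Ch q = {} \<longleftrightarrow> q = n"
    proof
      assume "Ch q = {}"
      hence "t \<notin> Ch q" by simp
      thus "q = n" using t q unfolding Ch_def by auto
    next
      assume "q = n"
      thus "Ch q = {}" using wi unfolding Ch_def by force
    qed
  qed
  have pb: "1 \<le> pp" "pp \<le> n" using md_bounds[OF n0] by auto
  have hz: "hom_zero n T X \<longleftrightarrow> Ch a = {} \<and> Ch pp = {}"
  proof -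
    have "hom_zero n T X \<longleftrightarrow> (\<forall>i < length T. i \<notin> Ch a \<and> i \<notin> Ch pp)"
      unfolding hom_zero_def Xab using HBX[OF a bn] by auto
    also have "\<dots> \<longleftrightarrow> Ch a = {} \<and> Ch pp = {}" unfolding Ch_def by auto
    finally show ?thesis .
  qed
  have pn: "a = n \<Longrightarrow> (pp = n \<longleftrightarrow> (n + b) mod n = n - 1)"
    unfolding md_def by auto
  have part1: "hom_zero n T X \<longleftrightarrow> (\<exists>k::int. k \<ge> 2 \<and> X = (n, k * n - 1))"
  proof -
    have "hom_zero n T X \<longleftrightarrow> a = n \<and> pp = n" using hz chE[OF a] chE[OF pb] by simp
    also have "\<dots> \<longleftrightarrow> a = n \<and> (n + b) mod n = n - 1" using pn by auto
    also have "\<dots> \<longleftrightarrow> a = n \<and> (\<exists>k. k \<ge> 2 \<and> b = k * n - 1)" using arith_k[OF n2 bn] by simp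
    also have "\<dots> \<longleftrightarrow> (\<exists>k::int. k \<ge> 2 \<and> X = (n, k * n - 1))" unfolding Xab by auto
    finally show ?thesis .
  qed
  show ?thesis using part1 iso by simp
qed


end
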